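(* There is a unique Lie algebra morphism $\rho_{\mathfrak g}:\bar{\mathfrak t}_{1,n}\to\mathcal H_n(\mathfrak g)$ such that $\bar x_i\mapsto\sum_\alpha \mathrm x_\alpha\otimes e_\alpha^{(i)}$, $\bar y_i\mapsto-\sum_\alpha\partial_\alpha\otimes e_\alpha^{(i)}$, $\bar t_{ij}\mapsto 1\otimes t_{\mathfrak g}^{(ij)}$ (classes in $\mathcal H_n(\mathfrak g)$).
   Context: $\mathfrak g$ is a finite-dimensional complex Lie algebra with nondegenerate invariant symmetric tensor $t_{\mathfrak g}\in S^2(\mathfrak g)^{\mathfrak g}$, inducing an invariant nondegenerate symmetric pairing $\langle\,,\rangle$; $(e_\alpha)$ is a basis with $t_{\mathfrak g}=\sum_\alpha e_\alpha\otimes e_\alpha$. $D(\mathfrak g)$ is the algebra generated by $\mathrm x_a,\partial_a$ ($a\in\mathfrak g$), linear in $a$, with $[\mathrm x_a,\mathrm x_b]=[\partial_a,\partial_b]=0$, $[\partial_a,\mathrm x_b]=\langle a,b\rangle$; $\mathrm x_\alpha=\mathrm x_{e_\alpha}$, $\partial_\alpha=\partial_{e_\alpha}$. $X_a=\sum_\alpha\mathrm x_{[a,e_\alpha]}\partial_{e_\alpha}$. $A_n=D(\mathfrak g)\otimes U(\mathfrak g)^{\otimes n}$, $Y_a=X_a\otimes1+1\otimes\sum_{i=1}^na^{(i)}$ (where $u^{(i)}$ is $u$ in the $i$-th factor), $\mathfrak g^{\mathrm{diag}}=\{Y_a\}$, and $\mathcal H_n(\mathfrak g)=\{x\in A_n:Y_ax\in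 A_n\mathfrak g^{\mathrm{diag}}\ \forall a\}/A_n\mathfrak g^{\mathrm{diag}}$ (Hecke algebra). $t_{\mathfrak g}^{(ij)}=\sum_\alpha e_\alpha^{(i)}e_\alpha^{(j)}$. $\bar{\mathfrak t}_{1,n}=\mathfrak t_{1,n}/(\sum x_i,\sum y_i)$ where $\mathfrak t_{1,n}$ has generators $x_i,y_i,t_{ij}$ and relations $t_{ij}=t_{ji}$, $[t_{ij},t_{ik}+t_{jk}]=0$, $[t_{ij},t_{kl}]=0$, $[x_i,y_j]=t_{ij}$ ($i\ne j$), $[x_i,x_j]=[y_i,y_j]=0$, $[x_i,y_i]=-\sum_{j\ne i}t_{ij}$, $[x_i,t_{jk}]=[y_i,t_{jk}]=0$, $[x_i+x_j,t_{ij}]=[y_i+y_j,t_{ij}]=0$ ($i,j,k,l$ distinct). *)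

theory Defs
  imports Complex_Main
begin

text \<open>An element of the free associative algebra on generators of type 'v is a
finitely supported function from words to complex coefficients.  Operations are
defined on all functions; the algebra itself is the carrier fa_fin.\<close>

type_synonym 'v fa = "'v list \<Rightarrow> complex"

definition fa_fin :: "'v fa set" where
  "fa_fin = {f. finite {w. f w \<noteq> 0}}"

definition fa_zero :: "'v fa" where "fa_zero = (\<lambda>_. 0)"
definition fa_one :: "'v fa" where "fa_one = (\<lambda>w. if w = [] then 1 else 0)"
definition fa_gen :: "'v \<Rightarrow> 'v fa" where "fa_gen v = (\<lambda>w. if w = [v] then 1 else 0)"
definition fa_add :: "'v fa \<Rightarrow> 'v fa \<Rightarrow> 'v fa" where "fa_add f g = (\<lambda>w. f w + g w)"
definition fa_smult :: "complex \<Rightarrow> 'v fa \<Rightarrow> 'v fa" where "fa_smult c f = (\<lambda>w. c * f w)"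
definition fa_sub :: "'v fa \<Rightarrow> 'v fa \<Rightarrow> 'v fa" where "fa_sub f g = (\<lambda>w. f w - g w)"
definition fa_mul :: "'v fa \<Rightarrow> 'v fa \<Rightarrow> 'v fa" where
  "fa_mul f g = (\<lambda>w. \<Sum>k\<le>length w. f (take k w) * g (drop k w))"
definition fa_sum :: "('i \<Rightarrow> 'v fa) \<Rightarrow> 'i set \<Rightarrow> 'v fa" where
  "fa_sum F A = (\<lambda>w. \<Sum>i\<in>A. F i w)"
definition fa_br :: "'v fa \<Rightarrow> 'v fa \<Rightarrow> 'v fa" where
  "fa_br f g = fa_sub (fa_mul f g) (fa_mul g f)"

definition fa_subspace :: "'v fa set \<Rightarrow> bool" where
  "fa_subspace I \<longleftrightarrow> I \<subseteq> fa_fin \<and> fa_zero \<in> I \<and> (\<forall>x\<in>I. \<forall>y\<in>I. fa_add x y \<in> I)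
     \<and> (\<forall>c. \<forall>x\<in>I. fa_smult c x \<in> I)"

definition two_sided_ideal :: "'v fa set \<Rightarrow> bool" where
  "two_sided_ideal I \<longleftrightarrow> fa_subspace I \<and> (\<forall>a\<in>fa_fin. \<forall>x\<in>I. fa_mul a x \<in> I \<and> fa_mul x a \<in> I)"

definition left_ideal :: "'v fa set \<Rightarrow> bool" where
  "left_ideal I \<longleftrightarrow> fa_subspace I \<and> (\<forall>a\<in>fa_fin. \<forall>x\<in>I. fa_mul a x \<in> I)"

definition ideal_gen :: "'v fa set \<Rightarrow> 'v fa set" where
  "ideal_gen S = \<Inter>{I. two_sided_ideal I \<and> S \<subseteq> I}"

definition left_ideal_gen :: "'v fa set \<Rightarrow> 'v fa set" where
  "left_ideal_gen S = \<Inter>{I. left_ideal I \<and> S \<subseteq> I}"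

definition lie_sub :: "'v fa set \<Rightarrow> bool" where
  "lie_sub K \<longleftrightarrow> fa_subspace K \<and> (\<forall>x\<in>K. \<forall>y\<in>K. fa_br x y \<in> K)"

definition lie_sub_gen :: "'v fa set \<Rightarrow> 'v fa set" where
  "lie_sub_gen S = \<Inter>{K. lie_sub K \<and> S \<subseteq> K}"

definition lie_ideal_in :: "'v fa set \<Rightarrow> 'v fa set \<Rightarrow> bool" where
  "lie_ideal_in L K \<longleftrightarrow> fa_subspace K \<and> K \<subseteq> L \<and> (\<forall>x\<in>L. \<forall>k\<in>K. fa_br x k \<in> K)"

definition lie_ideal_gen :: "'v fa set \<Rightarrow> 'v fa set \<Rightarrow> 'v fa set" where
  "lie_ideal_gen L S = \<Inter>{K. lie_ideal_in L K \<and> S \<subseteq> K}"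

text \<open>[e_a, e_b] = sum_k c a b k e_k; the invariant form is <e_a,e_b> = delta_ab,
so that t_g = sum_a e_a \<otimes> e_a.\<close>

definition quadratic_lie :: "nat \<Rightarrow> (nat \<Rightarrow> nat \<Rightarrow> nat \<Rightarrow> complex) \<Rightarrow> bool" where
  "quadratic_lie d c \<longleftrightarrow>
     (\<forall>a<d. \<forall>b<d. \<forall>k<d. c a b k = - c b a k)
   \<and> (\<forall>a<d. \<forall>b<d. \<forall>k<d. \<forall>l<d.
        (\<Sum>m<d. c a b m * c m k l + c b k m * c m a l + c k a m * c m b l) = 0)
   \<and> (\<forall>a<d. \<forall>b<d. \<forall>k<d. c a b k = c b k a)"

section \<open>A_n = D(g) \<otimes> U(g)^{\<otimes> n}, presented by generators and relations\<close>

datatype agen = Xg nat | Dg nat | Eg nat nat  (* x_alpha, partial_alpha, e_alpha^{(i)} *)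

definition An_rels :: "nat \<Rightarrow> (nat \<Rightarrow> nat \<Rightarrow> nat \<Rightarrow> complex) \<Rightarrow> nat \<Rightarrow> agen fa set" where
  "An_rels d c n =
     {fa_br (fa_gen (Xg a)) (fa_gen (Xg b)) | a b. a < d \<and> b < d}
   \<union> {fa_br (fa_gen (Dg a)) (fa_gen (Dg b)) | a b. a < d \<and> b < d}
   \<union> {fa_sub (fa_br (fa_gen (Dg a)) (fa_gen (Xg b))) (if a = b then fa_one else fa_zero) | a b. a < d \<and> b < d}
   \<union> {fa_sub (fa_br (fa_gen (Eg a i)) (fa_gen (Eg b i))) (fa_sum (\<lambda>k. fa_smult (c a b k) (fa_gen (Eg k i))) {..<d})
        | a b i. a < d \<and> b < d \<and> i \<in> {1..n}}
   \<union> {fa_br (fa_gen (Eg a i)) (fa_gen (Eg b j)) | a b i j. a < d \<and> b < d \<and> i \<in> {1..n} \<and> j \<in> {1..n} \<and> i \<noteq> j}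
   \<union> {fa_br (fa_gen (Xg a)) (fa_gen (Eg b i)) | a b i. a < d \<and> b < d \<and> i \<in> {1..n}}
   \<union> {fa_br (fa_gen (Dg a)) (fa_gen (Eg b i)) | a b i. a < d \<and> b < d \<and> i \<in> {1..n}}"

text \<open>Y_a for a = sum_beta a_beta e_beta:
  Y_a = sum_alpha x_{[a,e_alpha]} partial_alpha + sum_i a^{(i)}.\<close>

definition Yel :: "nat \<Rightarrow> (nat \<Rightarrow> nat \<Rightarrow> nat \<Rightarrow> complex) \<Rightarrow> nat \<Rightarrow> (nat \<Rightarrow> complex) \<Rightarrow> agen fa" where
  "Yel d c n a = fa_add
     (fa_sum (\<lambda>\<alpha>. fa_sum (\<lambda>\<beta>. fa_sum (\<lambda>k.
         fa_smult (a \<beta> * c \<beta> \<alpha> k) (fa_mul (fa_gen (Xg k)) (fa_gen (Dg \<alpha>)))) {..<d}) {..<d}) {..<d})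
     (fa_sum (\<lambda>i. fa_sum (\<lambda>\<beta>. fa_smult (a \<beta>) (fa_gen (Eg \<beta> i))) {..<d}) {1..n})"

text \<open>Preimage in the free algebra of the left ideal A_n g^diag of A_n.\<close>
definition Jdiag :: "nat \<Rightarrow> (nat \<Rightarrow> nat \<Rightarrow> nat \<Rightarrow> complex) \<Rightarrow> nat \<Rightarrow> agen fa set" where
  "Jdiag d c n = left_ideal_gen (ideal_gen (An_rels d c n) \<union> range (Yel d c n))"

text \<open>Preimage in the free algebra of {x \<in> A_n. Y_a x \<in> A_n g^diag for all a}.\<close>
definition Nnorm :: "nat \<Rightarrow> (nat \<Rightarrow> nat \<Rightarrow> nat \<Rightarrow> complex) \<Rightarrow> nat \<Rightarrow> agen fa set" where
  "Nnorm d c n = {p \<in> fa_fin. \<forall>a. fa_mul (Yel d c n a) p \<in> Jdiag d c n}"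

definition cosH :: "nat \<Rightarrow> (nat \<Rightarrow> nat \<Rightarrow> nat \<Rightarrow> complex) \<Rightarrow> nat \<Rightarrow> agen fa \<Rightarrow> agen fa set" where
  "cosH d c n p = {fa_add p j | j. j \<in> Jdiag d c n}"

text \<open>The Hecke algebra H_n(g), as the set of classes.\<close>
definition Hecke :: "nat \<Rightarrow> (nat \<Rightarrow> nat \<Rightarrow> nat \<Rightarrow> complex) \<Rightarrow> nat \<Rightarrow> agen fa set set" where
  "Hecke d c n = cosH d c n ` Nnorm d c n"

datatype tgen = TX nat | TY nat | TT nat nat

definition t_gens :: "nat \<Rightarrow> tgen set" where
  "t_gens n = {TX i | i. i \<in> {1..n}} \<union> {TY i | i. i \<in> {1..n}}
             \<union> {TT i j | i j. i \<in> {1..n} \<and> j \<in> {1..n} \<and> i \<noteq> j}"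

text \<open>The free Lie algebra on t_gens, realised as the Lie subalgebra of the free
associative algebra generated by the generators.\<close>
definition tL :: "nat \<Rightarrow> tgen fa set" where
  "tL n = lie_sub_gen (fa_gen ` t_gens n)"

abbreviation tx :: "nat \<Rightarrow> tgen fa" where "tx i \<equiv> fa_gen (TX i)"
abbreviation ty :: "nat \<Rightarrow> tgen fa" where "ty i \<equiv> fa_gen (TY i)"
abbreviation tt :: "nat \<Rightarrow> nat \<Rightarrow> tgen fa" where "tt i j \<equiv> fa_gen (TT i j)"

definition t_rels :: "nat \<Rightarrow> tgen fa set" where
  "t_rels n =
     {fa_sub (tt i j) (tt j i) | i j. i \<in> {1..n} \<and> j \<in> {1..n} \<and> i \<noteq> j}
   \<union> {fa_br (tt i j) (fa_add (tt i k) (tt j k)) | i j k.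
        i \<in> {1..n} \<and> j \<in> {1..n} \<and> k \<in> {1..n} \<and> distinct [i, j, k]}
   \<union> {fa_br (tt i j) (tt k l) | i j k l.
        i \<in> {1..n} \<and> j \<in> {1..n} \<and> k \<in> {1..n} \<and> l \<in> {1..n} \<and> distinct [i, j, k, l]}
   \<union> {fa_sub (fa_br (tx i) (ty j)) (tt i j) | i j. i \<in> {1..n} \<and> j \<in> {1..n} \<and> i \<noteq> j}
   \<union> {fa_br (tx i) (tx j) | i j. i \<in> {1..n} \<and> j \<in> {1..n}}
   \<union> {fa_br (ty i) (ty j) | i j. i \<in> {1..n} \<and> j \<in> {1..n}}
   \<union> {fa_add (fa_br (tx i) (ty i)) (fa_sum (\<lambda>j. tt i j) ({1..n} - {i})) | i. i \<in> {1..n}}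
   \<union> {fa_br (tx i) (tt j k) | i j k. i \<in> {1..n} \<and> j \<in> {1..n} \<and> k \<in> {1..n} \<and> distinct [i, j, k]}
   \<union> {fa_br (ty i) (tt j k) | i j k. i \<in> {1..n} \<and> j \<in> {1..n} \<and> k \<in> {1..n} \<and> distinct [i, j, k]}
   \<union> {fa_br (fa_add (tx i) (tx j)) (tt i j) | i j. i \<in> {1..n} \<and> j \<in> {1..n} \<and> i \<noteq> j}
   \<union> {fa_br (fa_add (ty i) (ty j)) (tt i j) | i j. i \<in> {1..n} \<and> j \<in> {1..n} \<and> i \<noteq> j}
   \<union> {fa_sum tx {1..n}, fa_sum ty {1..n}}"

definition tR :: "nat \<Rightarrow> tgen fa set" where
  "tR n = lie_ideal_gen (tL n) (t_rels n)"

definition cosT :: "nat \<Rightarrow> tgen fa \<Rightarrow> tgen fa set" where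
  "cosT n u = {fa_add u r | r. r \<in> tR n}"

text \<open>tbar_{1,n} = tL / tR, as the set of classes.\<close>
definition tbar :: "nat \<Rightarrow> tgen fa set set" where
  "tbar n = cosT n ` tL n"

text \<open>phi is a Lie algebra morphism from tbar_{1,n} to H_n(g) (with commutator
bracket), extensional outside tbar_{1,n}.  Operations on classes are computed
on representatives.\<close>
definition lie_hom_tH :: "nat \<Rightarrow> (nat \<Rightarrow> nat \<Rightarrow> nat \<Rightarrow> complex) \<Rightarrow> nat
    \<Rightarrow> (tgen fa set \<Rightarrow> agen fa set) \<Rightarrow> bool" where
  "lie_hom_tH d c n \<phi> \<longleftrightarrow>
     (\<forall>U\<in>tbar n. \<phi> U \<in> Hecke d c n)
   \<and> (\<forall>U. U \<notin> tbar n \<longrightarrow> \<phi> U = {})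
   \<and> (\<forall>u\<in>tL n. \<forall>v\<in>tL n. \<forall>p\<in>\<phi> (cosT n u). \<forall>q\<in>\<phi> (cosT n v).
        \<phi> (cosT n (fa_add u v)) = cosH d c n (fa_add p q)
      \<and> \<phi> (cosT n (fa_br u v)) = cosH d c n (fa_br p q))
   \<and> (\<forall>u\<in>tL n. \<forall>p\<in>\<phi> (cosT n u). \<forall>s.
        \<phi> (cosT n (fa_smult s u)) = cosH d c n (fa_smult s p))"

end

theory Submission
  imports Defs
begin


lemma fa_mul_Nil: "fa_mul f g [] = f [] * g []"
  by (simp add: fa_mul_def)

lemma fa_mul_Cons: "fa_mul f g (a#w) = f [] * g (a#w) + fa_mul (\<lambda>u. f (a#u)) g w"
  unfolding fa_mul_def
  by (simp add: sum.atMost_Suc_shift del: sum.atMost_Suc)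

lemma fa_mul_add_left: "fa_mul (\<lambda>u. f u + g u) h w = fa_mul f h w + fa_mul g h w"
  unfolding fa_mul_def by (simp add: distrib_right sum.distrib)

lemma fa_mul_add_right: "fa_mul h (\<lambda>u. f u + g u) w = fa_mul h f w + fa_mul h g w"
  unfolding fa_mul_def by (simp add: distrib_left sum.distrib)

lemma fa_mul_smult_left: "fa_mul (\<lambda>u. s * f u) h w = s * fa_mul f h w"
  unfolding fa_mul_def by (simp add: sum_distrib_left mult.assoc)

lemma fa_mul_assoc: "fa_mul (fa_mul f g) h w = fa_mul f (fa_mul g h) w"
proof (induction w arbitrary: f g h)
  case Nil
  then show ?case by (simp add: fa_mul_Nil)
next
  case (Cons a w)
  have e: "(\<lambda>u. fa_mul f g (a#u)) = (\<lambda>u. f [] * g (a#u) + fa_mul (\<lambda>u. f (a#u)) g u)"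
    by (simp add: fa_mul_Cons)
  have "fa_mul (fa_mul f g) h (a#w) = f [] * g [] * h (a#w)
     + (f [] * fa_mul (\<lambda>u. g (a#u)) h w + fa_mul (fa_mul (\<lambda>u. f (a#u)) g) h w)"
    by (simp add: fa_mul_Cons e fa_mul_add_left fa_mul_smult_left fa_mul_Nil del: fa_mul_def)
  also have "\<dots> = fa_mul f (fa_mul g h) (a#w)"
    by (simp add: fa_mul_Cons Cons.IH fa_mul_Nil algebra_simps)
  finally show ?case .
qed

datatype 'v ps = PS (coef: "'v fa")

lemma ps_eqI: "coef p = coef q \<Longrightarrow> p = q" by (cases p, cases q) auto

instantiation ps :: (type) ring_1
begin
definition "0 = PS fa_zero"
definition "1 = PS fa_one"
definition "p + q = PS (fa_add (coef p) (coef q))"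
definition "p - q = PS (fa_sub (coef p) (coef q))"
definition "- p = PS (\<lambda>w. - coef p w)"
definition "p * q = PS (fa_mul (coef p) (coef q))"
instance
proof
  fix a b c :: "'a ps"
  show "a * b * c = a * (b * c)"
    by (simp add: times_ps_def fa_mul_assoc fun_eq_iff)
  show "a + b + c = a + (b + c)" by (simp add: plus_ps_def fa_add_def add.assoc)
  show "a + b = b + a" by (simp add: plus_ps_def fa_add_def add.commute)
  show "0 + a = a" by (cases a) (simp add: plus_ps_def fa_add_def zero_ps_def fa_zero_def)
  show "- a + a = 0" by (simp add: plus_ps_def fa_add_def zero_ps_def fa_zero_def uminus_ps_def)
  show "a - b = a + - b" by (simp add: plus_ps_def fa_add_def minus_ps_def fa_sub_def uminus_ps_def)
  show "(a + b) * c = a * c + b * c"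
    by (simp add: plus_ps_def times_ps_def fa_add_def[abs_def] fun_eq_iff fa_mul_add_left)
  show "a * (b + c) = a * b + a * c"
    by (simp add: plus_ps_def times_ps_def fa_add_def[abs_def] fun_eq_iff fa_mul_add_right)
  show "1 * a = a"
  proof (cases a)
    case (PS f)
    have "fa_mul fa_one f w = f w" for w
      unfolding fa_mul_def fa_one_def
      by (subst sum.remove[of _ 0]) auto
    then show ?thesis using PS by (simp add: one_ps_def times_ps_def fun_eq_iff)
  qed
  show "a * 1 = a"
  proof (cases a)
    case (PS f)
    have "fa_mul f fa_one w = f w" for w
      unfolding fa_mul_def fa_one_def
      by (subst sum.remove[of _ "length w"]) auto
    then show ?thesis using PS by (simp add: one_ps_def times_ps_def fun_eq_iff)
  qed
  show "(0::'a ps) \<noteq> 1"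
    by (simp add: zero_ps_def one_ps_def fa_zero_def fa_one_def fun_eq_iff)
qed
end


definition sc :: "complex \<Rightarrow> 'v ps" where "sc c = PS (\<lambda>w. if w = [] then c else 0)"

lemma coef_add[simp]: "coef (p + q) = fa_add (coef p) (coef q)" by (simp add: plus_ps_def)
lemma coef_sub[simp]: "coef (p - q) = fa_sub (coef p) (coef q)" by (simp add: minus_ps_def)
lemma coef_mul[simp]: "coef (p * q) = fa_mul (coef p) (coef q)" by (simp add: times_ps_def)
lemma coef_zero[simp]: "coef 0 = fa_zero" by (simp add: zero_ps_def)
lemma coef_one[simp]: "coef 1 = fa_one" by (simp add: one_ps_def)
lemma coef_uminus[simp]: "coef (- p) = (\<lambda>w. - coef p w)" by (simp add: uminus_ps_def)

lemma fa_mul_scl: "fa_mul (\<lambda>w. if w = [] then c else 0) f = fa_smult c f"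
  unfolding fa_mul_def fa_smult_def fun_eq_iff by (intro allI, subst sum.remove[of _ 0]) auto

lemma fa_mul_scr: "fa_mul f (\<lambda>w. if w = [] then c else 0) = fa_smult c f"
proof (rule ext)
  fix w show "fa_mul f (\<lambda>w. if w = [] then c else 0) w = fa_smult c f w"
    unfolding fa_mul_def fa_smult_def
    by (subst sum.remove[of _ "length w"]) (auto simp: mult.commute)
qed

lemma coef_sc[simp]: "coef (sc c) = (\<lambda>w. if w = [] then c else 0)" by (simp add: sc_def)

lemma coef_sc_mul: "coef (sc c * p) = fa_smult c (coef p)"
  by (simp add: fa_mul_scl)

lemma coef_mul_sc: "coef (p * sc c) = fa_smult c (coef p)"
  by (simp add: fa_mul_scr)

lemma sc_central: "sc c * p = p * sc c"
  by (rule ps_eqI) (simp add: fa_mul_scl fa_mul_scr)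

lemma sc_add: "sc (a + b) = sc a + sc b" by (rule ps_eqI) (auto simp: sc_def fa_add_def)
lemma sc_mult: "sc (a * b) = sc a * sc b"
  by (rule ps_eqI) (auto simp: fa_mul_scl fa_smult_def)
lemma sc_0[simp]: "sc 0 = 0" by (rule ps_eqI) (auto simp: sc_def fa_zero_def)
lemma sc_1[simp]: "sc 1 = 1" by (rule ps_eqI) (auto simp: sc_def fa_one_def)
lemma sc_uminus: "sc (- a) = - sc a" by (rule ps_eqI) (auto simp: sc_def)
lemma sc_diff: "sc (a - b) = sc a - sc b" by (rule ps_eqI) (auto simp: sc_def fa_sub_def)
lemma sc_sum: "sc (sum f A) = (\<Sum>i\<in>A. sc (f i))"
  by (induction A rule: infinite_finite_induct) (auto simp: sc_add)

lemma PS_coef[simp]: "PS (coef p) = p" by (cases p) auto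
lemma PS_add: "PS (fa_add f g) = PS f + PS g" by (rule ps_eqI) simp
lemma PS_sub: "PS (fa_sub f g) = PS f - PS g" by (rule ps_eqI) simp
lemma PS_mul: "PS (fa_mul f g) = PS f * PS g" by (rule ps_eqI) simp
lemma PS_zero: "PS fa_zero = 0" by (rule ps_eqI) simp
lemma PS_one: "PS fa_one = 1" by (rule ps_eqI) simp
lemma PS_smult: "PS (fa_smult c f) = sc c * PS f" by (rule ps_eqI) (simp add: fa_mul_scl)
lemma PS_br: "PS (fa_br f g) = PS f * PS g - PS g * PS f"
  by (simp add: fa_br_def PS_sub PS_mul)
lemma PS_sum: "PS (fa_sum G A) = (\<Sum>i\<in>A. PS (G i))"
proof (induction A rule: infinite_finite_induct)
  case (infinite A) then show ?case by (simp add: fa_sum_def PS_zero[symmetric] fa_zero_def)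
next
  case empty then show ?case by (simp add: fa_sum_def PS_zero[symmetric] fa_zero_def)
next
  case (insert x F)
  have "fa_sum G (insert x F) = fa_add (G x) (fa_sum G F)"
    using insert by (simp add: fa_sum_def fa_add_def fun_eq_iff)
  then show ?case using insert by (simp add: PS_add)
qed

lemmas PS_simps = PS_add PS_sub PS_mul PS_zero PS_one PS_smult PS_br PS_sum

definition fin :: "'v ps \<Rightarrow> bool" where "fin p \<longleftrightarrow> coef p \<in> fa_fin"

lemma fin_PS[simp]: "fin (PS f) \<longleftrightarrow> f \<in> fa_fin" by (simp add: fin_def)

lemma fin_add[simp,intro]: "fin p \<Longrightarrow> fin q \<Longrightarrow> fin (p + q)"
proof -
  assume "fin p" "fin q"
  then have "finite ({w. coef p w \<noteq> 0} \<union> {w. coef q w \<noteq> 0})" by (simp add: fin_def fa_fin_def)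
  moreover have "{w. coef (p+q) w \<noteq> 0} \<subseteq> {w. coef p w \<noteq> 0} \<union> {w. coef q w \<noteq> 0}"
    by (auto simp: fa_add_def)
  ultimately show ?thesis unfolding fin_def fa_fin_def by (blast intro: finite_subset)
qed

lemma fin_uminus[simp,intro]: "fin p \<Longrightarrow> fin (- p)"
  unfolding fin_def fa_fin_def by simp

lemma fin_diff[simp,intro]: "fin p \<Longrightarrow> fin q \<Longrightarrow> fin (p - q)"
  unfolding diff_conv_add_uminus by (intro fin_add fin_uminus)

lemma fin_zero[simp,intro]: "fin 0" unfolding fin_def fa_fin_def by (simp add: fa_zero_def)
lemma fin_one[simp,intro]: "fin 1" unfolding fin_def fa_fin_def by (simp add: fa_one_def)
lemma fin_sc[simp,intro]: "fin (sc c)" unfolding fin_def fa_fin_def by simp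

lemma fin_mul[simp,intro]: "fin p \<Longrightarrow> fin q \<Longrightarrow> fin (p * q)"
proof -
  assume a: "fin p" "fin q"
  let ?S = "(\<lambda>(u,v). u @ v) ` ({u. coef p u \<noteq> 0} \<times> {v. coef q v \<noteq> 0})"
  have "{w. fa_mul (coef p) (coef q) w \<noteq> 0} \<subseteq> ?S"
  proof
    fix w assume "w \<in> {w. fa_mul (coef p) (coef q) w \<noteq> 0}"
    then obtain k where "coef p (take k w) * coef q (drop k w) \<noteq> 0"
      unfolding fa_mul_def by (auto elim: sum.not_neutral_contains_not_neutral)
    then show "w \<in> ?S" by (auto intro!: image_eqI[of _ _ "(take k w, drop k w)"])
  qed
  moreover have "finite ?S" using a by (auto simp: fin_def fa_fin_def)
  ultimately show ?thesis unfolding fin_def fa_fin_def using finite_subset by auto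
qed

lemma fin_sum[simp,intro]: "(\<And>i. i \<in> A \<Longrightarrow> fin (f i)) \<Longrightarrow> fin (sum f A)"
  by (induction A rule: infinite_finite_induct) auto

lemma fin_gen[simp,intro]: "fin (PS (fa_gen v))" by (simp add: fa_fin_def fa_gen_def)


lemma fa_fin_add: "f \<in> fa_fin \<Longrightarrow> g \<in> fa_fin \<Longrightarrow> fa_add f g \<in> fa_fin"
  using fin_add[of "PS f" "PS g"] by (simp add: fin_def)
lemma fa_fin_mul: "f \<in> fa_fin \<Longrightarrow> g \<in> fa_fin \<Longrightarrow> fa_mul f g \<in> fa_fin"
  using fin_mul[of "PS f" "PS g"] by (simp add: fin_def)
lemma fa_fin_smult: "f \<in> fa_fin \<Longrightarrow> fa_smult c f \<in> fa_fin"
  using fin_mul[of "sc c" "PS f"] fin_sc[of c] by (simp add: fa_mul_scl fin_def)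
lemma fa_fin_sub: "f \<in> fa_fin \<Longrightarrow> g \<in> fa_fin \<Longrightarrow> fa_sub f g \<in> fa_fin"
  using fin_diff[of "PS f" "PS g"] by (simp add: fin_def)
lemma fa_fin_zero: "fa_zero \<in> fa_fin" using fin_zero by (simp add: fin_def)
lemma fa_fin_br: "f \<in> fa_fin \<Longrightarrow> g \<in> fa_fin \<Longrightarrow> fa_br f g \<in> fa_fin"
  by (simp add: fa_br_def fa_fin_sub fa_fin_mul)

lemma subspace_fa_fin: "fa_subspace fa_fin"
  by (simp add: fa_subspace_def fa_fin_add fa_fin_smult fa_fin_zero)

lemma two_sided_fa_fin: "two_sided_ideal fa_fin"
  by (simp add: two_sided_ideal_def subspace_fa_fin fa_fin_mul)

lemma left_fa_fin: "left_ideal fa_fin"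
  by (simp add: left_ideal_def subspace_fa_fin fa_fin_mul)

lemma lie_sub_fa_fin: "lie_sub fa_fin"
  by (simp add: lie_sub_def subspace_fa_fin fa_fin_br)

lemma subspace_Inter: "\<F> \<noteq> {} \<Longrightarrow> (\<And>I. I \<in> \<F> \<Longrightarrow> fa_subspace I) \<Longrightarrow> fa_subspace (\<Inter>\<F>)"
  unfolding fa_subspace_def by blast

lemma ideal_gen_ideal: "S \<subseteq> fa_fin \<Longrightarrow> two_sided_ideal (ideal_gen S)"
  unfolding ideal_gen_def two_sided_ideal_def
  apply (rule conjI)
   apply (rule subspace_Inter) using two_sided_fa_fin
    apply (auto simp: two_sided_ideal_def)
  done

lemma ideal_gen_sup: "S \<subseteq> ideal_gen S" unfolding ideal_gen_def by blast
lemma ideal_gen_min: "two_sided_ideal I \<Longrightarrow> S \<subseteq> I \<Longrightarrow> ideal_gen S \<subseteq> I"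
  unfolding ideal_gen_def by blast

lemma left_ideal_gen_ideal: "S \<subseteq> fa_fin \<Longrightarrow> left_ideal (left_ideal_gen S)"
  unfolding left_ideal_gen_def left_ideal_def
  apply (rule conjI)
   apply (rule subspace_Inter) using left_fa_fin
    apply (auto simp: left_ideal_def)
  done

lemma left_ideal_gen_sup: "S \<subseteq> left_ideal_gen S" unfolding left_ideal_gen_def by blast
lemma left_ideal_gen_min: "left_ideal I \<Longrightarrow> S \<subseteq> I \<Longrightarrow> left_ideal_gen S \<subseteq> I"
  unfolding left_ideal_gen_def by blast

lemma lie_sub_gen_sub: "S \<subseteq> fa_fin \<Longrightarrow> lie_sub (lie_sub_gen S)"
  unfolding lie_sub_gen_def lie_sub_def
  apply (rule conjI)
   apply (rule subspace_Inter) using lie_sub_fa_fin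
    apply (auto simp: lie_sub_def)
  done

lemma lie_sub_gen_sup: "S \<subseteq> lie_sub_gen S" unfolding lie_sub_gen_def by blast
lemma lie_sub_gen_min: "lie_sub K \<Longrightarrow> S \<subseteq> K \<Longrightarrow> lie_sub_gen S \<subseteq> K"
  unfolding lie_sub_gen_def by blast

lemma lie_ideal_gen_ideal: "lie_sub L \<Longrightarrow> S \<subseteq> L \<Longrightarrow> lie_ideal_in L (lie_ideal_gen L S)"
  unfolding lie_ideal_gen_def lie_ideal_in_def
  apply (intro conjI)
    apply (rule subspace_Inter)
  by (auto simp: lie_sub_def)

lemma lie_ideal_gen_sup: "S \<subseteq> lie_ideal_gen L S" unfolding lie_ideal_gen_def by blast
lemma lie_ideal_gen_min: "lie_ideal_in L K \<Longrightarrow> S \<subseteq> K \<Longrightarrow> lie_ideal_gen L S \<subseteq> K"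
  unfolding lie_ideal_gen_def by blast

lemma sub_add: "fa_subspace I \<Longrightarrow> coef p \<in> I \<Longrightarrow> coef q \<in> I \<Longrightarrow> coef (p + q) \<in> I"
  by (simp add: fa_subspace_def)
lemma sub_scmul: "fa_subspace I \<Longrightarrow> coef p \<in> I \<Longrightarrow> coef (sc s * p) \<in> I"
  by (simp add: fa_subspace_def fa_mul_scl)
lemma sub_zero: "fa_subspace I \<Longrightarrow> coef 0 \<in> I"
  by (simp add: fa_subspace_def)
lemma sub_uminus: "fa_subspace I \<Longrightarrow> coef p \<in> I \<Longrightarrow> coef (- p) \<in> I"
  using sub_scmul[of I p "-1"] by (simp add: sc_uminus)
lemma sub_diff: "fa_subspace I \<Longrightarrow> coef p \<in> I \<Longrightarrow> coef q \<in> I \<Longrightarrow> coef (p - q) \<in> I"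
  unfolding diff_conv_add_uminus by (intro sub_add sub_uminus)
lemma sub_sum: "fa_subspace I \<Longrightarrow> (\<And>i. i \<in> A \<Longrightarrow> coef (f i) \<in> I) \<Longrightarrow> coef (sum f A) \<in> I"
  by (induction A rule: infinite_finite_induct) (auto simp del: coef_add coef_zero intro: sub_add sub_zero)
lemma sub_fin: "fa_subspace I \<Longrightarrow> coef p \<in> I \<Longrightarrow> fin p"
  by (auto simp: fa_subspace_def fin_def)


definition br :: "'v ps \<Rightarrow> 'v ps \<Rightarrow> 'v ps" where "br p q = p * q - q * p"

lemma br_add_l: "br (a + b) q = br a q + br b q" by (simp add: br_def algebra_simps)
lemma br_add_r: "br p (a + b) = br p a + br p b" by (simp add: br_def algebra_simps)
lemma br_diff_l: "br (a - b) q = br a q - br b q" by (simp add: br_def algebra_simps)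
lemma br_diff_r: "br p (a - b) = br p a - br p b" by (simp add: br_def algebra_simps)
lemma br_uminus_l: "br (- a) q = - br a q" by (simp add: br_def algebra_simps)
lemma br_uminus_r: "br p (- a) = - br p a" by (simp add: br_def algebra_simps)
lemma br_sum_l: "br (sum f A) q = (\<Sum>i\<in>A. br (f i) q)"
  by (simp add: br_def sum_distrib_left sum_distrib_right sum_subtractf)
lemma br_sum_r: "br p (sum f A) = (\<Sum>i\<in>A. br p (f i))"
  by (simp add: br_def sum_distrib_left sum_distrib_right sum_subtractf)
lemma br_mul_l: "br (a * b) q = a * br b q + br a q * b" by (simp add: br_def algebra_simps)
lemma br_mul_r: "br p (a * b) = br p a * b + a * br p b" by (simp add: br_def algebra_simps)
lemma br_sc_l: "br (sc s) q = 0" by (simp add: br_def sc_central)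
lemma br_sc_r: "br p (sc s) = 0" by (simp add: br_def sc_central)
lemma br_0_l: "br 0 q = 0" by (simp add: br_def)
lemma br_0_r: "br p 0 = 0" by (simp add: br_def)
lemma br_1_l: "br 1 q = 0" by (simp add: br_def)
lemma br_1_r: "br p 1 = 0" by (simp add: br_def)

lemmas br_expand = br_add_l br_add_r br_diff_l br_diff_r br_uminus_l br_uminus_r br_sum_l br_sum_r
  br_mul_l br_mul_r br_sc_l br_sc_r br_0_l br_0_r br_1_l br_1_r

lemma fin_br[simp,intro]: "fin p \<Longrightarrow> fin q \<Longrightarrow> fin (br p q)" by (simp add: br_def)
lemma fin_if[simp]: "fin a \<Longrightarrow> fin b \<Longrightarrow> fin (if P then a else b)" by simp

lemma PS_br': "PS (fa_br f g) = br (PS f) (PS g)" by (simp add: PS_br br_def)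

definition xx :: "nat \<Rightarrow> agen ps" where "xx a = PS (fa_gen (Xg a))"
definition dd :: "nat \<Rightarrow> agen ps" where "dd a = PS (fa_gen (Dg a))"
definition ee :: "nat \<Rightarrow> nat \<Rightarrow> agen ps" where "ee a i = PS (fa_gen (Eg a i))"

lemma fa_gen_fin[simp]: "fa_gen v \<in> fa_fin" using fin_gen[of v] by (simp only: fin_PS)
lemma fin_xx[simp,intro]: "fin (xx a)" by (simp add: xx_def)
lemma fin_dd[simp,intro]: "fin (dd a)" by (simp add: dd_def)
lemma fin_ee[simp,intro]: "fin (ee a i)" by (simp add: ee_def)

lemma fa_fin_iff: "f \<in> fa_fin \<longleftrightarrow> fin (PS f)" by simp

definition Yb :: "nat \<Rightarrow> (nat \<Rightarrow> nat \<Rightarrow> nat \<Rightarrow> complex) \<Rightarrow> nat \<Rightarrow> nat \<Rightarrow> agen ps" where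
  "Yb d c n \<beta> = (\<Sum>\<alpha><d. \<Sum>k<d. sc (c \<beta> \<alpha> k) * (xx k * dd \<alpha>)) + (\<Sum>i\<in>{1..n}. ee \<beta> i)"

lemma fin_Yb[simp,intro]: "fin (Yb d c n \<beta>)" by (simp add: Yb_def)

lemma PS_Yel: "PS (Yel d c n a) = (\<Sum>\<beta><d. sc (a \<beta>) * Yb d c n \<beta>)"
proof -
  have "PS (Yel d c n a) = (\<Sum>\<alpha><d. \<Sum>\<beta><d. \<Sum>k<d. sc (a \<beta>) * (sc (c \<beta> \<alpha> k) * (xx k * dd \<alpha>)))
      + (\<Sum>i\<in>{1..n}. \<Sum>\<beta><d. sc (a \<beta>) * ee \<beta> i)"
    by (simp add: Yel_def PS_simps xx_def dd_def ee_def sc_mult mult.assoc)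
  also have "\<dots> = (\<Sum>\<beta><d. sc (a \<beta>) * Yb d c n \<beta>)"
    unfolding Yb_def distrib_left sum.distrib sum_distrib_left
    by (subst sum.swap, subst (2) sum.swap) simp
  finally show ?thesis .
qed

lemma fin_PS_Yel: "fin (PS (Yel d c n a))" by (simp add: PS_Yel)


lemma fa_fin_sum: "(\<And>i. i \<in> A \<Longrightarrow> F i \<in> fa_fin) \<Longrightarrow> fa_sum F A \<in> fa_fin"
proof -
  assume "\<And>i. i \<in> A \<Longrightarrow> F i \<in> fa_fin"
  then have "fin (PS (fa_sum F A))" by (simp add: PS_sum fin_sum)
  then show ?thesis by simp
qed

lemma fa_fin_one: "fa_one \<in> fa_fin" using fin_one by (simp add: fin_def)

lemma br_antisym: "br p q = - br q p" by (simp add: br_def)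

locale An =
  fixes d n :: nat and c :: "nat \<Rightarrow> nat \<Rightarrow> nat \<Rightarrow> complex"
  assumes ql: "quadratic_lie d c"
begin

lemma c_antisym: assumes "a < d" "b < d" "k < d" shows "c a b k = - c b a k"
proof -
  have "\<forall>a<d. \<forall>b<d. \<forall>k<d. c a b k = - c b a k" using ql unfolding quadratic_lie_def by (elim conjE)
  then show ?thesis using assms by metis
qed
lemma c_cyc: assumes "a < d" "b < d" "k < d" shows "c a b k = c b k a"
proof -
  have "\<forall>a<d. \<forall>b<d. \<forall>k<d. c a b k = c b k a" using ql unfolding quadratic_lie_def by (elim conjE)
  then show ?thesis using assms by metis
qed

lemma rels_fin: "An_rels d c n \<subseteq> fa_fin"
proof -
  have g: "fa_gen v \<in> fa_fin" for v by simp
  have 1: "(if a = b then fa_one else fa_zero :: agen fa) \<in> fa_fin" for a b :: nat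
    by (simp add: fa_fin_one fa_fin_zero)
  have 2: "fa_sum (\<lambda>k. fa_smult (c a b k) (fa_gen (Eg k i))) {..<d} \<in> fa_fin" for a b i
    by (rule fa_fin_sum) (rule fa_fin_smult[OF g])
  show ?thesis unfolding An_rels_def
    by (intro Un_least; clarify; intro fa_fin_br fa_fin_sub g 1 2)
qed

abbreviation "II \<equiv> ideal_gen (An_rels d c n)"

lemma II_ideal: "two_sided_ideal II" by (rule ideal_gen_ideal[OF rels_fin])
lemma II_sub: "fa_subspace II" using II_ideal by (simp add: two_sided_ideal_def)
lemma II_fin: "II \<subseteq> fa_fin" using II_sub by (simp add: fa_subspace_def)

definition inI :: "agen ps \<Rightarrow> bool" where "inI p \<longleftrightarrow> coef p \<in> II"

lemma inI_add: "inI p \<Longrightarrow> inI q \<Longrightarrow> inI (p + q)" unfolding inI_def by (rule sub_add[OF II_sub])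
lemma inI_diff: "inI p \<Longrightarrow> inI q \<Longrightarrow> inI (p - q)" unfolding inI_def by (rule sub_diff[OF II_sub])
lemma inI_uminus: "inI p \<Longrightarrow> inI (- p)" unfolding inI_def by (rule sub_uminus[OF II_sub])
lemma inI_scmul: "inI p \<Longrightarrow> inI (sc s * p)" unfolding inI_def by (rule sub_scmul[OF II_sub])
lemma inI_zero: "inI 0" unfolding inI_def by (rule sub_zero[OF II_sub])
lemma inI_sum: "(\<And>i. i \<in> A \<Longrightarrow> inI (f i)) \<Longrightarrow> inI (sum f A)" unfolding inI_def by (rule sub_sum[OF II_sub])
lemma inI_fin: "inI p \<Longrightarrow> fin p" unfolding inI_def by (rule sub_fin[OF II_sub])
lemma inI_mul_l: "fin a \<Longrightarrow> inI p \<Longrightarrow> inI (a * p)"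
  using II_ideal unfolding inI_def two_sided_ideal_def fin_def by simp
lemma inI_mul_r: "fin a \<Longrightarrow> inI p \<Longrightarrow> inI (p * a)"
  using II_ideal unfolding inI_def two_sided_ideal_def fin_def by simp
lemma inI_rel: "r \<in> An_rels d c n \<Longrightarrow> inI (PS r)"
  using ideal_gen_sup[of "An_rels d c n"] unfolding inI_def by auto

definition eqI :: "agen ps \<Rightarrow> agen ps \<Rightarrow> bool" (infix "\<doteq>" 50) where "p \<doteq> q \<longleftrightarrow> inI (p - q)"

lemma cI_refl: "p \<doteq> p" by (simp add: eqI_def inI_zero)
lemma cI_sym: "p \<doteq> q \<Longrightarrow> q \<doteq> p" unfolding eqI_def using inI_uminus by fastforce
lemma cI_trans[trans]: "p \<doteq> q \<Longrightarrow> q \<doteq> r \<Longrightarrow> p \<doteq> r"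
  unfolding eqI_def using inI_add by fastforce
lemma cI_eq_trans[trans]: "p = q \<Longrightarrow> q \<doteq> r \<Longrightarrow> p \<doteq> r" by simp
lemma cI_trans_eq[trans]: "p \<doteq> q \<Longrightarrow> q = r \<Longrightarrow> p \<doteq> r" by simp
lemma cI_add: "a \<doteq> a' \<Longrightarrow> b \<doteq> b' \<Longrightarrow> a + b \<doteq> a' + b'"
  unfolding eqI_def by (drule (1) inI_add) (simp add: algebra_simps)
lemma cI_diff: "a \<doteq> a' \<Longrightarrow> b \<doteq> b' \<Longrightarrow> a - b \<doteq> a' - b'"
  unfolding eqI_def by (drule (1) inI_diff) (simp add: algebra_simps)
lemma cI_uminus: "a \<doteq> a' \<Longrightarrow> - a \<doteq> - a'"
  unfolding eqI_def by (drule inI_uminus) (simp add: algebra_simps)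
lemma cI_sum: "(\<And>i. i \<in> A \<Longrightarrow> f i \<doteq> g i) \<Longrightarrow> sum f A \<doteq> sum g A"
  unfolding eqI_def by (drule inI_sum) (simp add: sum_subtractf)
lemma cI_mul: "a \<doteq> a' \<Longrightarrow> b \<doteq> b' \<Longrightarrow> fin b \<Longrightarrow> fin a' \<Longrightarrow> a * b \<doteq> a' * b'"
proof -
  assume h: "a \<doteq> a'" "b \<doteq> b'" "fin b" "fin a'"
  have "inI ((a - a') * b + a' * (b - b'))"
    using h by (intro inI_add inI_mul_l inI_mul_r) (auto simp: eqI_def)
  then show ?thesis by (simp add: eqI_def algebra_simps)
qed
lemma cI_inI: "p \<doteq> q \<Longrightarrow> q = 0 \<Longrightarrow> inI p" by (simp add: eqI_def)

lemma rel_gen: "r \<in> An_rels d c n \<Longrightarrow> PS r = p \<Longrightarrow> inI p"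
  using inI_rel by blast

lemma rel_xx: "a < d \<Longrightarrow> b < d \<Longrightarrow> br (xx a) (xx b) \<doteq> 0"
  unfolding eqI_def diff_zero
  by (rule rel_gen[of "fa_br (fa_gen (Xg a)) (fa_gen (Xg b))"])
     (unfold An_rels_def, blast, simp add: PS_br' xx_def)
lemma rel_dd: "a < d \<Longrightarrow> b < d \<Longrightarrow> br (dd a) (dd b) \<doteq> 0"
  unfolding eqI_def diff_zero
  by (rule rel_gen[of "fa_br (fa_gen (Dg a)) (fa_gen (Dg b))"])
     (unfold An_rels_def, blast, simp add: PS_br' dd_def)
lemma rel_dx: "a < d \<Longrightarrow> b < d \<Longrightarrow> br (dd a) (xx b) \<doteq> (if a = b then 1 else 0)"
  unfolding eqI_def
  by (rule rel_gen[of "fa_sub (fa_br (fa_gen (Dg a)) (fa_gen (Xg b))) (if a = b then fa_one else fa_zero)"])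
     (unfold An_rels_def, blast, cases "a = b", simp_all add: PS_sub PS_br' dd_def xx_def PS_one PS_zero)
lemma rel_xd: "a < d \<Longrightarrow> b < d \<Longrightarrow> br (xx a) (dd b) \<doteq> - (if b = a then 1 else 0)"
  using rel_dx[of b a] by (subst br_antisym) (rule cI_uminus)
lemma rel_xe: "a < d \<Longrightarrow> b < d \<Longrightarrow> i \<in> {1..n} \<Longrightarrow> br (xx a) (ee b i) \<doteq> 0"
  unfolding eqI_def diff_zero
  by (rule rel_gen[of "fa_br (fa_gen (Xg a)) (fa_gen (Eg b i))"])
     (unfold An_rels_def, blast, simp add: PS_br' xx_def ee_def)
lemma rel_de: "a < d \<Longrightarrow> b < d \<Longrightarrow> i \<in> {1..n} \<Longrightarrow> br (dd a) (ee b i) \<doteq> 0"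
  unfolding eqI_def diff_zero
  by (rule rel_gen[of "fa_br (fa_gen (Dg a)) (fa_gen (Eg b i))"])
     (unfold An_rels_def, blast, simp add: PS_br' dd_def ee_def)
lemma rel_ex: "a < d \<Longrightarrow> b < d \<Longrightarrow> i \<in> {1..n} \<Longrightarrow> br (ee b i) (xx a) \<doteq> 0"
proof -
  assume h: "a < d" "b < d" "i \<in> {1..n}"
  have "inI (- br (xx a) (ee b i))" using rel_xe[OF h] by (intro inI_uminus) (simp add: eqI_def)
  then show ?thesis by (subst br_antisym) (simp add: eqI_def)
qed
lemma rel_ed: "a < d \<Longrightarrow> b < d \<Longrightarrow> i \<in> {1..n} \<Longrightarrow> br (ee b i) (dd a) \<doteq> 0"
proof -
  assume h: "a < d" "b < d" "i \<in> {1..n}"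
  have "inI (- br (dd a) (ee b i))" using rel_de[OF h] by (intro inI_uminus) (simp add: eqI_def)
  then show ?thesis by (subst br_antisym) (simp add: eqI_def)
qed
lemma rel_ee: "a < d \<Longrightarrow> b < d \<Longrightarrow> i \<in> {1..n} \<Longrightarrow> j \<in> {1..n} \<Longrightarrow>
   br (ee a i) (ee b j) \<doteq> (if i = j then (\<Sum>k<d. sc (c a b k) * ee k i) else 0)"
proof (cases "i = j")
  case True
  assume h: "a < d" "b < d" "i \<in> {1..n}" "j \<in> {1..n}"
  have "inI (br (ee a i) (ee b i) - (\<Sum>k<d. sc (c a b k) * ee k i))"
    by (rule rel_gen[of "fa_sub (fa_br (fa_gen (Eg a i)) (fa_gen (Eg b i))) (fa_sum (\<lambda>k. fa_smult (c a b k) (fa_gen (Eg k i))) {..<d})"])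
     (use h in \<open>unfold An_rels_def, blast\<close>, simp add: PS_sub PS_br' PS_sum PS_smult ee_def)
  then show ?thesis using True by (simp add: eqI_def)
next
  case False
  assume h: "a < d" "b < d" "i \<in> {1..n}" "j \<in> {1..n}"
  have "inI (br (ee a i) (ee b j))"
    by (rule rel_gen[of "fa_br (fa_gen (Eg a i)) (fa_gen (Eg b j))"])
     (use h False in \<open>unfold An_rels_def, blast\<close>, simp add: PS_br' ee_def)
  then show ?thesis using False by (simp add: eqI_def)
qed

lemmas rel_leaves = rel_xx rel_dd rel_dx rel_xd rel_xe rel_de rel_ex rel_ed rel_ee

abbreviation "JJ \<equiv> Jdiag d c n"

lemma gens_fin: "II \<union> range (Yel d c n) \<subseteq> fa_fin"
  using II_fin fin_PS_Yel[of d c n] by (auto simp: fin_def)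

lemma JJ_left: "left_ideal JJ" unfolding Jdiag_def by (rule left_ideal_gen_ideal[OF gens_fin])
lemma JJ_sub: "fa_subspace JJ" using JJ_left by (simp add: left_ideal_def)

definition inJ :: "agen ps \<Rightarrow> bool" where "inJ p \<longleftrightarrow> coef p \<in> JJ"

lemma inJ_add: "inJ p \<Longrightarrow> inJ q \<Longrightarrow> inJ (p + q)" unfolding inJ_def by (rule sub_add[OF JJ_sub])
lemma inJ_diff: "inJ p \<Longrightarrow> inJ q \<Longrightarrow> inJ (p - q)" unfolding inJ_def by (rule sub_diff[OF JJ_sub])
lemma inJ_uminus: "inJ p \<Longrightarrow> inJ (- p)" unfolding inJ_def by (rule sub_uminus[OF JJ_sub])
lemma inJ_scmul: "inJ p \<Longrightarrow> inJ (sc s * p)" unfolding inJ_def by (rule sub_scmul[OF JJ_sub])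
lemma inJ_zero: "inJ 0" unfolding inJ_def by (rule sub_zero[OF JJ_sub])
lemma inJ_sum: "(\<And>i. i \<in> A \<Longrightarrow> inJ (f i)) \<Longrightarrow> inJ (sum f A)" unfolding inJ_def by (rule sub_sum[OF JJ_sub])
lemma inJ_fin: "inJ p \<Longrightarrow> fin p" unfolding inJ_def by (rule sub_fin[OF JJ_sub])
lemma inJ_mul_l: "fin a \<Longrightarrow> inJ p \<Longrightarrow> inJ (a * p)"
  using JJ_left unfolding inJ_def left_ideal_def fin_def by simp
lemma inI_inJ: "inI p \<Longrightarrow> inJ p"
  using left_ideal_gen_sup[of "II \<union> range (Yel d c n)"] unfolding inI_def inJ_def Jdiag_def by auto
lemma inJ_Yel: "inJ (PS (Yel d c n a))"
  using left_ideal_gen_sup[of "II \<union> range (Yel d c n)"] unfolding inJ_def Jdiag_def by auto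

lemma Yb_Yel: "\<beta> < d \<Longrightarrow> Yb d c n \<beta> = PS (Yel d c n (\<lambda>\<gamma>. if \<gamma> = \<beta> then 1 else 0))"
  by (simp add: PS_Yel if_distrib[of sc] if_distrib[of "\<lambda>x. x * _"] cong: if_cong)

lemma inJ_Yb: "\<beta> < d \<Longrightarrow> fin q \<Longrightarrow> inJ (q * Yb d c n \<beta>)"
  using inJ_mul_l[OF _ inJ_Yel] Yb_Yel by simp

lemma inJ_cI: "p \<doteq> q \<Longrightarrow> inJ q \<Longrightarrow> inJ p"
proof -
  assume "p \<doteq> q" "inJ q"
  then have "inJ ((p - q) + q)" by (intro inJ_add[OF inI_inJ]) (auto simp: eqI_def)
  then show ?thesis by simp
qed

definition inN :: "agen ps \<Rightarrow> bool" where "inN p \<longleftrightarrow> coef p \<in> Nnorm d c n"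

lemma inN_iff: "inN p \<longleftrightarrow> fin p \<and> (\<forall>a. inJ (PS (Yel d c n a) * p))"
  by (simp add: inN_def Nnorm_def inJ_def fin_def)

lemma inN_fin: "inN p \<Longrightarrow> fin p" by (simp add: inN_iff)

lemma inJ_mul_N: "inN q \<Longrightarrow> inJ j \<Longrightarrow> inJ (j * q)"
proof -
  assume q: "inN q" and j: "inJ j"
  let ?K = "{f \<in> fa_fin. inJ (PS f * q)}"
  have "left_ideal ?K"
    unfolding left_ideal_def fa_subspace_def
  proof (intro conjI ballI allI)
    show "?K \<subseteq> fa_fin" by blast
    show "fa_zero \<in> ?K" using fa_fin_zero inJ_zero by (simp add: PS_zero)
  next
    fix x y assume "x \<in> ?K" "y \<in> ?K"
    then show "fa_add x y \<in> ?K" using inJ_add[of "PS x * q" "PS y * q"] fa_fin_add[of x y] by (simp add: PS_add distrib_right)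
  next
    fix s x assume "x \<in> ?K"
    then show "fa_smult s x \<in> ?K" using inJ_scmul[of "PS x * q" s] fa_fin_smult[of x s] by (simp add: PS_smult mult.assoc)
  next
    fix a :: "agen fa" and x assume "a \<in> fa_fin" "x \<in> ?K"
    then show "fa_mul a x \<in> ?K"
      using inJ_mul_l[of "PS a" "PS x * q"] fa_fin_mul[of a x] by (simp add: PS_mul mult.assoc)
  qed
  moreover have "II \<union> range (Yel d c n) \<subseteq> ?K"
  proof
    fix f assume f: "f \<in> II \<union> range (Yel d c n)"
    then have ff: "f \<in> fa_fin" using gens_fin by blast
    show "f \<in> ?K"
    proof (cases "f \<in> II")
      case True
      then have "inI (PS f * q)" using inI_mul_r[of q "PS f"] inN_fin[OF q] by (simp add: inI_def)
      then show ?thesis using ff inI_inJ by blast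
    next
      case False
      then obtain a where "f = Yel d c n a" using f by blast
      then show ?thesis using ff q by (simp add: inN_iff)
    qed
  qed
  ultimately have "JJ \<subseteq> ?K" unfolding Jdiag_def by (rule left_ideal_gen_min)
  then show ?thesis using j by (auto simp: inJ_def)
qed

lemma inN_add: "inN p \<Longrightarrow> inN q \<Longrightarrow> inN (p + q)"
  by (auto simp: inN_iff distrib_left intro: inJ_add)
lemma inN_diff: "inN p \<Longrightarrow> inN q \<Longrightarrow> inN (p - q)"
  by (auto simp: inN_iff right_diff_distrib intro: inJ_diff)
lemma inN_scmul: "inN p \<Longrightarrow> inN (sc s * p)"
proof -
  assume p: "inN p"
  have "PS (Yel d c n a) * (sc s * p) = sc s * (PS (Yel d c n a) * p)" for a
    by (simp add: mult.assoc[symmetric] sc_central) (simp add: mult.assoc sc_central)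
  then show ?thesis using p by (simp add: inN_iff inJ_scmul)
qed
lemma inN_zero: "inN 0" by (simp add: inN_iff inJ_zero)
lemma inN_mul: "inN p \<Longrightarrow> inN q \<Longrightarrow> inN (p * q)"
proof -
  assume p: "inN p" and q: "inN q"
  have "inJ ((PS (Yel d c n a) * p) * q)" for a
    using p q by (rule_tac inJ_mul_N) (auto simp: inN_iff)
  then show ?thesis using p q by (simp add: inN_iff mult.assoc)
qed
lemma inN_br: "inN p \<Longrightarrow> inN q \<Longrightarrow> inN (br p q)"
  by (simp add: br_def inN_diff inN_mul)

lemma inN_gen: "fin g \<Longrightarrow> (\<And>\<beta>. \<beta> < d \<Longrightarrow> inI (br (Yb d c n \<beta>) g)) \<Longrightarrow> inN g"
proof -
  assume g: "fin g" and h: "\<And>\<beta>. \<beta> < d \<Longrightarrow> inI (br (Yb d c n \<beta>) g)"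
  have "inJ (PS (Yel d c n a) * g)" for a
  proof -
    have "PS (Yel d c n a) * g = (\<Sum>\<beta><d. sc (a \<beta>) * (g * Yb d c n \<beta> + br (Yb d c n \<beta>) g))"
      by (simp add: PS_Yel sum_distrib_right mult.assoc br_def)
    moreover have "inJ \<dots>"
      using g h by (intro inJ_sum inJ_scmul inJ_add inJ_Yb inI_inJ) auto
    ultimately show ?thesis by simp
  qed
  then show ?thesis using g by (simp add: inN_iff)
qed

end


context An begin

lemma c_anti23: assumes "a < d" "b < d" "k < d" shows "c a b k = - c a k b"
proof -
  have "c a b k = c b k a" by (rule c_cyc[OF assms])
  also have "\<dots> = - c k b a" by (rule c_antisym) (use assms in auto)
  also have "c k b a = c a k b" by (rule c_cyc[symmetric]) (use assms in auto)
  finally show ?thesis .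
qed

lemma lv_xx: "a \<in> {..<d} \<Longrightarrow> b \<in> {..<d} \<Longrightarrow> br (xx a) (xx b) \<doteq> 0" by (simp add: rel_xx)
lemma lv_dd: "a \<in> {..<d} \<Longrightarrow> b \<in> {..<d} \<Longrightarrow> br (dd a) (dd b) \<doteq> 0" by (simp add: rel_dd)
lemma lv_dx: "a \<in> {..<d} \<Longrightarrow> b \<in> {..<d} \<Longrightarrow> br (dd a) (xx b) \<doteq> (if a = b then 1 else 0)" by (simp add: rel_dx)
lemma lv_xd: "a \<in> {..<d} \<Longrightarrow> b \<in> {..<d} \<Longrightarrow> br (xx a) (dd b) \<doteq> - (if b = a then 1 else 0)" by (simp add: rel_xd)
lemma lv_xe: "a \<in> {..<d} \<Longrightarrow> b \<in> {..<d} \<Longrightarrow> i \<in> {1..n} \<Longrightarrow> br (xx a) (ee b i) \<doteq> 0" by (simp add: rel_xe)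
lemma lv_de: "a \<in> {..<d} \<Longrightarrow> b \<in> {..<d} \<Longrightarrow> i \<in> {1..n} \<Longrightarrow> br (dd a) (ee b i) \<doteq> 0" by (simp add: rel_de)
lemma lv_ex: "a \<in> {..<d} \<Longrightarrow> b \<in> {..<d} \<Longrightarrow> i \<in> {1..n} \<Longrightarrow> br (ee b i) (xx a) \<doteq> 0" by (simp add: rel_ex)
lemma lv_ed: "a \<in> {..<d} \<Longrightarrow> b \<in> {..<d} \<Longrightarrow> i \<in> {1..n} \<Longrightarrow> br (ee b i) (dd a) \<doteq> 0" by (simp add: rel_ed)
lemma lv_ee: "a \<in> {..<d} \<Longrightarrow> b \<in> {..<d} \<Longrightarrow> i \<in> {1..n} \<Longrightarrow> j \<in> {1..n} \<Longrightarrow>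
   br (ee a i) (ee b j) \<doteq> (if i = j then (\<Sum>k<d. sc (c a b k) * ee k i) else 0)" by (simp add: rel_ee)

lemma fin_if': "fin a \<Longrightarrow> fin b \<Longrightarrow> fin (if P then a else b)" by simp

lemmas cong_rules = lv_xx lv_dd lv_dx lv_xd lv_xe lv_de lv_ex lv_ed lv_ee
  cI_add cI_diff cI_uminus cI_sum cI_mul cI_refl
  fin_add fin_diff fin_uminus fin_mul fin_sum fin_xx fin_dd fin_ee fin_sc fin_zero fin_one fin_if' fin_br

lemma sc_xx: "xx a * (sc s * b) = sc s * (xx a * b)" by (simp add: mult.assoc[symmetric] sc_central[of s "xx a"])
lemma sc_dd: "dd a * (sc s * b) = sc s * (dd a * b)" by (simp add: mult.assoc[symmetric] sc_central[of s "dd a"])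
lemma sc_ee: "ee a i * (sc s * b) = sc s * (ee a i * b)" by (simp add: mult.assoc[symmetric] sc_central[of s "ee a i"])
lemma sc_xx': "xx a * sc s = sc s * xx a" by (simp add: sc_central)
lemma sc_dd': "dd a * sc s = sc s * dd a" by (simp add: sc_central)
lemma sc_ee': "ee a i * sc s = sc s * ee a i" by (simp add: sc_central)
lemma sc_sc: "sc s * (sc t * b) = sc (s * t) * b" by (simp add: sc_mult mult.assoc)
lemma sc_sc': "sc s * sc t = sc (s * t)" by (simp add: sc_mult)
lemma if_mult_l: "(if P then a else 0) * b = (if P then a * b else (0::'v ps))" by simp
lemma if_mult_r: "b * (if P then a else 0) = (if P then b * a else (0::'v ps))" by simp
lemma if_sum_const: "(\<Sum>x\<in>A. if P then f x else (0::'v ps)) = (if P then (\<Sum>x\<in>A. f x) else 0)" by simp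
lemma if_add_0: "(if P then a else 0) + (if P then b else 0) = (if P then a + b else (0::'v ps))" by simp

lemma swap_cancel:
  assumes "\<And>a x. a \<in> A \<Longrightarrow> x \<in> A \<Longrightarrow> k x a = - k a x"
  shows "(\<Sum>a\<in>A. \<Sum>x\<in>A. sc (k a x) * M x a + sc (k a x) * M a x) = (0::'v ps)"
proof -
  have "(\<Sum>a\<in>A. \<Sum>x\<in>A. sc (k a x) * M a x) = (\<Sum>x\<in>A. \<Sum>a\<in>A. sc (k a x) * M a x)"
    by (rule sum.swap)
  also have "\<dots> = (\<Sum>x\<in>A. \<Sum>a\<in>A. - (sc (k x a) * M a x))"
    by (intro sum.cong refl) (metis assms sc_uminus mult_minus_left)
  finally show ?thesis by (simp add: sum.distrib sum_negf)
qed

lemmas norm = sum_distrib_left sum_distrib_right mult.assoc sc_xx sc_dd sc_ee sc_xx' sc_dd' sc_ee' sc_sc sc_sc'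
  if_mult_l if_mult_r if_sum_const sum.delta sum.delta' sum.distrib[symmetric]

definition XX :: "nat \<Rightarrow> agen ps" where "XX i = (\<Sum>\<alpha><d. xx \<alpha> * ee \<alpha> i)"
definition YY :: "nat \<Rightarrow> agen ps" where "YY i = sc (-1) * (\<Sum>\<alpha><d. dd \<alpha> * ee \<alpha> i)"
definition Tm :: "nat \<Rightarrow> nat \<Rightarrow> agen ps" where "Tm i j = (\<Sum>\<alpha><d. ee \<alpha> i * ee \<alpha> j)"

lemma N1: "\<beta> \<in> {..<d} \<Longrightarrow> i \<in> {1..n} \<Longrightarrow> inI (br (Yb d c n \<beta>) (XX i))"
  apply (rule cI_inI)
   apply (simp only: Yb_def XX_def br_expand)
   apply ((rule cong_rules | assumption)+)[1]
  apply (simp add: norm)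
  apply (rule swap_cancel)
  apply (rule c_anti23)
  by auto

end


context An begin

lemma if_uminus0: "- (if P then a else 0) = (if P then - a else (0::'v ps))" by simp

lemma swap_diff0: "(\<Sum>a\<in>A. \<Sum>x\<in>A. h * (g a x - g x a)) = (0::'v ps)"
proof -
  have "(\<Sum>a\<in>A. \<Sum>x\<in>A. g x a) = (\<Sum>a\<in>A. \<Sum>x\<in>A. g a x)" by (rule sum.swap)
  then show ?thesis by (simp add: sum_distrib_left[symmetric] sum_subtractf)
qed

lemma c_anti23': "a < d \<Longrightarrow> b < d \<Longrightarrow> k < d \<Longrightarrow> - c a b k = c a k b"
  using c_anti23[of a b k] by simp

lemma swap_cancel3:
  assumes "\<And>a x y. a \<in> A \<Longrightarrow> x \<in> A \<Longrightarrow> y \<in> A \<Longrightarrow> k x y a = - k x a y"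
  shows "(\<Sum>a\<in>A. \<Sum>x\<in>A. \<Sum>y\<in>A. sc (k x a y) * (P x * Q y a) + sc (k x a y) * (P x * Q a y)) = (0::'v ps)"
proof -
  have "(\<Sum>a\<in>A. \<Sum>x\<in>A. \<Sum>y\<in>A. sc (k x a y) * (P x * Q y a) + sc (k x a y) * (P x * Q a y))
    = (\<Sum>x\<in>A. \<Sum>a\<in>A. \<Sum>y\<in>A. sc (k x a y) * (P x * Q y a) + sc (k x a y) * (P x * Q a y))"
    by (rule sum.swap)
  also have "\<dots> = 0"
    by (rule sum.neutral, rule ballI, rule swap_cancel) (metis assms)
  finally show ?thesis .
qed

lemma sc_m1: "sc (-1) * x = - x" by (simp add: sc_uminus)

lemmas br_expand_l = br_add_l br_add_r br_diff_l br_diff_r br_uminus_l br_uminus_r br_sum_l br_sum_r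
  br_mul_l br_sc_l br_sc_r br_0_l br_0_r br_1_l br_1_r

lemmas nrm = norm if_uminus0 sc_m1

lemma N2: "\<beta> \<in> {..<d} \<Longrightarrow> i \<in> {1..n} \<Longrightarrow> inI (br (Yb d c n \<beta>) (YY i))"
  apply (rule cI_inI)
   apply (simp only: Yb_def YY_def br_expand)
   apply ((rule cong_rules | assumption)+)[1]
  apply (simp add: norm if_uminus0)
  by (rule swap_diff0)

lemma N3: "\<beta> \<in> {..<d} \<Longrightarrow> i \<in> {1..n} \<Longrightarrow> j \<in> {1..n} \<Longrightarrow> i \<noteq> j \<Longrightarrow> inI (br (Yb d c n \<beta>) (Tm i j))"
  apply (rule cI_inI)
   apply (simp only: Yb_def Tm_def br_expand)
   apply ((rule cong_rules | assumption)+)[1]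
  apply (simp add: nrm)
  apply (rule swap_cancel)
  apply (rule c_anti23)
  by auto

lemma R1: "i \<in> {1..n} \<Longrightarrow> j \<in> {1..n} \<Longrightarrow> i \<noteq> j \<Longrightarrow> inI (Tm i j - Tm j i)"
  apply (subgoal_tac "Tm i j - Tm j i = (\<Sum>\<alpha><d. br (ee \<alpha> i) (ee \<alpha> j))")
   prefer 2 apply (simp add: Tm_def br_def sum_subtractf)
  apply (erule ssubst)
  apply (rule cI_inI)
   apply ((rule cong_rules | assumption)+)[1]
  apply (simp add: nrm)
  done

lemma R2: "i \<in> {1..n} \<Longrightarrow> j \<in> {1..n} \<Longrightarrow> k \<in> {1..n} \<Longrightarrow> distinct [i,j,k] \<Longrightarrow> inI (br (Tm i j) (Tm i k + Tm j k))"
  apply (rule cI_inI)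
   apply (simp only: Tm_def br_expand)
   apply ((rule cong_rules | assumption)+)[1]
  apply (simp add: nrm)
  apply (rule sum.neutral, rule ballI)
  apply (rule swap_cancel)
  apply (subst c_cyc, simp, simp, simp)
  apply (rule c_antisym)
  by auto

lemma R3: "i \<in> {1..n} \<Longrightarrow> j \<in> {1..n} \<Longrightarrow> k \<in> {1..n} \<Longrightarrow> l \<in> {1..n} \<Longrightarrow> distinct [i,j,k,l] \<Longrightarrow> inI (br (Tm i j) (Tm k l))"
  apply (rule cI_inI)
   apply (simp only: Tm_def br_expand)
   apply ((rule cong_rules | assumption)+)[1]
  apply (simp add: nrm)
  done

lemma R4: "i \<in> {1..n} \<Longrightarrow> j \<in> {1..n} \<Longrightarrow> i \<noteq> j \<Longrightarrow> inI (br (XX i) (YY j) - Tm i j)"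
  apply (rule cI_inI)
   apply (simp only: XX_def YY_def Tm_def br_expand)
   apply ((rule cong_rules | assumption)+)[1]
  apply (simp add: nrm)
  done

lemma R5: "i \<in> {1..n} \<Longrightarrow> j \<in> {1..n} \<Longrightarrow> i \<noteq> j \<Longrightarrow> inI (br (XX i) (XX j))"
  apply (rule cI_inI)
   apply (simp only: XX_def br_expand)
   apply ((rule cong_rules | assumption)+)[1]
  apply (simp add: nrm)
  done

lemma R6: "i \<in> {1..n} \<Longrightarrow> j \<in> {1..n} \<Longrightarrow> i \<noteq> j \<Longrightarrow> inI (br (YY i) (YY j))"
  apply (rule cI_inI)
   apply (simp only: YY_def br_expand)
   apply ((rule cong_rules | assumption)+)[1]
  apply (simp add: nrm)
  done

lemma R8: "i \<in> {1..n} \<Longrightarrow> j \<in> {1..n} \<Longrightarrow> k \<in> {1..n} \<Longrightarrow> distinct [i,j,k] \<Longrightarrow> inI (br (XX i) (Tm j k))"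
  apply (rule cI_inI)
   apply (simp only: XX_def Tm_def br_expand)
   apply ((rule cong_rules | assumption)+)[1]
  apply (simp add: nrm)
  done

lemma R9: "i \<in> {1..n} \<Longrightarrow> j \<in> {1..n} \<Longrightarrow> k \<in> {1..n} \<Longrightarrow> distinct [i,j,k] \<Longrightarrow> inI (br (YY i) (Tm j k))"
  apply (rule cI_inI)
   apply (simp only: YY_def Tm_def br_expand)
   apply ((rule cong_rules | assumption)+)[1]
  apply (simp add: nrm)
  done

lemma R10: "i \<in> {1..n} \<Longrightarrow> j \<in> {1..n} \<Longrightarrow> i \<noteq> j \<Longrightarrow> inI (br (XX i + XX j) (Tm i j))"
  apply (rule cI_inI)
   apply (simp only: XX_def Tm_def br_expand_l, (simp only: br_expand)?)
   apply ((rule cong_rules | assumption)+)[1]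
  apply (simp add: nrm)
  apply (rule swap_cancel3)
  apply (rule c_anti23)
  by auto

lemma R11: "i \<in> {1..n} \<Longrightarrow> j \<in> {1..n} \<Longrightarrow> i \<noteq> j \<Longrightarrow> inI (br (YY i + YY j) (Tm i j))"
  apply (rule cI_inI)
   apply (simp only: YY_def Tm_def br_expand_l, (simp only: br_expand)?)
   apply ((rule cong_rules | assumption)+)[1]
  apply (simp add: nrm)
  apply (rule swap_cancel3)
  apply (simp only: minus_minus)
  apply (rule c_anti23')
  by auto

end


context An begin

lemma R7_exact: "(\<Sum>\<alpha><d. ee \<alpha> i * Yb d c n \<alpha>) =
   (\<Sum>\<alpha><d. (\<Sum>\<gamma><d. \<Sum>k<d. sc (c \<alpha> \<gamma> k) * (xx k * dd \<gamma> * ee \<alpha> i + br (ee \<alpha> i) (xx k * dd \<gamma>)))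
     + (\<Sum>j\<in>{1..n}. ee \<alpha> i * ee \<alpha> j))"
proof -
  have h: "ee a i * (sc s * M) = sc s * (M * ee a i + br (ee a i) M)" for a s M
    by (simp add: sc_ee br_def)
  show ?thesis by (simp add: Yb_def distrib_left sum_distrib_left h)
qed

lemma R7_c: "(\<Sum>a<d. \<Sum>n<d. \<Sum>m<d. sc (- c a n m) * (xx a * (dd n * ee m i))) =
   (\<Sum>a<d. \<Sum>g<d. \<Sum>k<d. sc (c a g k) * (xx k * (dd g * ee a i)))"
proof -
  have "(\<Sum>a<d. \<Sum>g<d. \<Sum>k<d. sc (c a g k) * (xx k * (dd g * ee a i)))
      = (\<Sum>m<d. \<Sum>n<d. \<Sum>a<d. sc (- c a n m) * (xx a * (dd n * ee m i)))"
  proof (intro sum.cong refl)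
    fix m n a assume "m \<in> {..<d}" "n \<in> {..<d}" "a \<in> {..<d}"
    then have "c m n a = - c a n m" using c_cyc[of m n a] c_antisym[of n a m] by simp
    then show "sc (c m n a) * (xx a * (dd n * ee m i)) = sc (- c a n m) * (xx a * (dd n * ee m i))" by simp
  qed
  also have "\<dots> = (\<Sum>m<d. \<Sum>a<d. \<Sum>n<d. sc (- c a n m) * (xx a * (dd n * ee m i)))"
    by (intro sum.cong refl sum.swap)
  also have "\<dots> = (\<Sum>a<d. \<Sum>m<d. \<Sum>n<d. sc (- c a n m) * (xx a * (dd n * ee m i)))"
    by (rule sum.swap)
  also have "\<dots> = (\<Sum>a<d. \<Sum>n<d. \<Sum>m<d. sc (- c a n m) * (xx a * (dd n * ee m i)))"
    by (intro sum.cong refl sum.swap)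
  finally show ?thesis by simp
qed

lemma split_i: "finite B \<Longrightarrow> i \<in> B \<Longrightarrow>
  (\<Sum>a\<in>A. f a i) + (\<Sum>j\<in>B-{i}. \<Sum>a\<in>A. f a j) = (\<Sum>a\<in>A. \<Sum>j\<in>B. f a j)"
proof -
  assume B: "finite B" "i \<in> B"
  have "(\<Sum>a\<in>A. \<Sum>j\<in>B. f a j) = (\<Sum>a\<in>A. f a i + (\<Sum>j\<in>B-{i}. f a j))"
    using B by (intro sum.cong refl) (rule sum.remove)
  also have "\<dots> = (\<Sum>a\<in>A. f a i) + (\<Sum>j\<in>B-{i}. \<Sum>a\<in>A. f a j)"
    by (simp add: sum.distrib sum.swap[of _ "B - {i}" A])
  finally show ?thesis by simp
qed

lemma R7_I: "i \<in> {1..n} \<Longrightarrow> inI (br (XX i) (YY i) + (\<Sum>j\<in>{1..n}-{i}. Tm i j) -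
   (\<Sum>\<alpha><d. (\<Sum>\<gamma><d. \<Sum>k<d. sc (c \<alpha> \<gamma> k) * (xx k * dd \<gamma> * ee \<alpha> i + br (ee \<alpha> i) (xx k * dd \<gamma>)))
     + (\<Sum>j\<in>{1..n}. ee \<alpha> i * ee \<alpha> j)))"
  apply (rule cI_inI)
   apply (simp only: XX_def YY_def Tm_def br_expand_l, (simp only: br_expand)?)
   apply ((rule cong_rules | assumption)+)[1]
  apply (simp add: nrm)
  apply (simp add: sum.distrib R7_c)
  apply (rule split_i)
  by auto

lemma R7: "i \<in> {1..n} \<Longrightarrow> inJ (br (XX i) (YY i) + (\<Sum>j\<in>{1..n}-{i}. Tm i j))"
proof -
  assume i: "i \<in> {1..n}"
  have q: "inJ (\<Sum>\<alpha><d. ee \<alpha> i * Yb d c n \<alpha>)" by (intro inJ_sum inJ_Yb) auto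
  have "br (XX i) (YY i) + (\<Sum>j\<in>{1..n}-{i}. Tm i j) \<doteq> (\<Sum>\<alpha><d. ee \<alpha> i * Yb d c n \<alpha>)"
    unfolding eqI_def R7_exact by (rule R7_I[OF i])
  then show ?thesis using q by (rule inJ_cI)
qed

end


lemma swap13: "(\<Sum>a\<in>A. \<Sum>g\<in>B. \<Sum>k\<in>C. F a g k) = (\<Sum>k\<in>C. \<Sum>g\<in>B. \<Sum>a\<in>A. F a g k)"
proof -
  have "(\<Sum>a\<in>A. \<Sum>g\<in>B. \<Sum>k\<in>C. F a g k) = (\<Sum>a\<in>A. \<Sum>k\<in>C. \<Sum>g\<in>B. F a g k)"
    by (intro sum.cong refl sum.swap)
  also have "\<dots> = (\<Sum>k\<in>C. \<Sum>a\<in>A. \<Sum>g\<in>B. F a g k)" by (rule sum.swap)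
  also have "\<dots> = (\<Sum>k\<in>C. \<Sum>g\<in>B. \<Sum>a\<in>A. F a g k)" by (intro sum.cong refl sum.swap)
  finally show ?thesis .
qed

context An begin

lemma inI_half: "inI (S + S) \<Longrightarrow> inI S"
proof -
  assume "inI (S + S)"
  then have a: "inI (sc (1/2) * (S + S))" by (rule inI_scmul)
  have b: "sc (1/2) * (S + S) = (sc (1/2) + sc (1/2)) * S" by (simp add: algebra_simps)
  have "sc (1/2) + sc (1/2) = (1 :: agen ps)" by (simp add: sc_add[symmetric])
  then show ?thesis using a b by simp
qed

lemma c_aga: "a < d \<Longrightarrow> g < d \<Longrightarrow> c a g a = 0"
  using c_anti23[of a g a] c_antisym[of a a g] by simp

lemma R12x: "inJ (\<Sum>i\<in>{1..n}. XX i)"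
proof -
  define S where "S = (\<Sum>a<d. \<Sum>g<d. \<Sum>k<d. sc (c a g k) * (xx a * (xx k * dd g)))"
  have q: "inJ (\<Sum>a<d. xx a * Yb d c n a)" by (intro inJ_sum inJ_Yb) auto
  have e1: "(\<Sum>a<d. xx a * Yb d c n a) = S + (\<Sum>a<d. \<Sum>i\<in>{1..n}. xx a * ee a i)"
    by (simp add: S_def Yb_def distrib_left sum_distrib_left sc_xx sum.distrib)
  have e: "(\<Sum>i\<in>{1..n}. XX i) = (\<Sum>a<d. xx a * Yb d c n a) - S"
    unfolding e1 XX_def by (simp only: add_diff_cancel_left') (rule sum.swap)
  have S': "(\<Sum>a<d. \<Sum>g<d. \<Sum>k<d. sc (c a g k) * (xx k * (xx a * dd g))) = - S"
  proof -
    have "(\<Sum>a<d. \<Sum>g<d. \<Sum>k<d. sc (c a g k) * (xx k * (xx a * dd g)))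
       = (\<Sum>k<d. \<Sum>g<d. \<Sum>a<d. sc (c a g k) * (xx k * (xx a * dd g)))" by (rule swap13)
    also have "\<dots> = (\<Sum>k<d. \<Sum>g<d. \<Sum>a<d. - (sc (c k g a) * (xx k * (xx a * dd g))))"
    proof (intro sum.cong refl)
      fix k g a assume "k \<in> {..<d}" "g \<in> {..<d}" "a \<in> {..<d}"
      then have "c a g k = - c k g a" using c_anti23[of a g k] c_cyc[of a k g] c_cyc[of k g a] by simp
      then show "sc (c a g k) * (xx k * (xx a * dd g)) = - (sc (c k g a) * (xx k * (xx a * dd g)))"
        by (simp add: sc_uminus)
    qed
    finally show ?thesis by (simp add: S_def sum_negf)
  qed
  have "S + S = S - (\<Sum>a<d. \<Sum>g<d. \<Sum>k<d. sc (c a g k) * (xx k * (xx a * dd g)))"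
    using S' by simp
  also have "\<dots> = (\<Sum>a<d. \<Sum>g<d. \<Sum>k<d. sc (c a g k) * (br (xx a) (xx k) * dd g))"
    by (simp add: S_def br_def sum_subtractf[symmetric] algebra_simps)
  finally have "inI (S + S)"
    using rel_xx eqI_def by (auto intro!: inI_sum inI_scmul inI_mul_r)
  then have "inI S" by (rule inI_half)
  then show ?thesis unfolding e by (intro inJ_diff q inI_inJ)
qed

lemma R12y: "inJ (\<Sum>i\<in>{1..n}. YY i)"
proof -
  define T where "T = (\<Sum>a<d. \<Sum>g<d. \<Sum>k<d. sc (c a g k) * (dd a * (xx k * dd g)))"
  define U where "U = (\<Sum>a<d. \<Sum>g<d. \<Sum>k<d. sc (c a g k) * (xx k * (dd a * dd g)))"
  define V where "V = (\<Sum>a<d. \<Sum>g<d. \<Sum>k<d. sc (c a g k) * (br (dd a) (xx k) * dd g))"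
  have q: "inJ (\<Sum>a<d. dd a * Yb d c n a)" by (intro inJ_sum inJ_Yb) auto
  have e1: "(\<Sum>a<d. dd a * Yb d c n a) = T + (\<Sum>a<d. \<Sum>i\<in>{1..n}. dd a * ee a i)"
    by (simp add: T_def Yb_def distrib_left sum_distrib_left sc_dd sum.distrib)
  have e2: "(\<Sum>i\<in>{1..n}. \<Sum>a<d. dd a * ee a i) = (\<Sum>a<d. \<Sum>i\<in>{1..n}. dd a * ee a i)"
    by (rule sum.swap)
  have e: "(\<Sum>i\<in>{1..n}. YY i) = T - (\<Sum>a<d. dd a * Yb d c n a)"
    unfolding YY_def sc_m1 sum_negf e2 e1 by simp
  have TUV: "T = U + V"
    by (simp add: T_def U_def V_def br_def sum.distrib[symmetric] algebra_simps)
  have V: "inI V"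
    unfolding V_def
    apply (rule cI_inI)
     apply ((rule cong_rules | assumption)+)[1]
    apply (simp add: nrm)
    apply (rule sum.neutral)
    apply (auto simp: c_aga)
    done
  have U': "(\<Sum>a<d. \<Sum>g<d. \<Sum>k<d. sc (c a g k) * (xx k * (dd g * dd a))) = - U"
  proof -
    have "(\<Sum>a<d. \<Sum>g<d. \<Sum>k<d. sc (c a g k) * (xx k * (dd g * dd a)))
       = (\<Sum>g<d. \<Sum>a<d. \<Sum>k<d. sc (c a g k) * (xx k * (dd g * dd a)))" by (rule sum.swap)
    also have "\<dots> = (\<Sum>g<d. \<Sum>a<d. \<Sum>k<d. - (sc (c g a k) * (xx k * (dd g * dd a))))"
    proof (intro sum.cong refl)
      fix k g a assume "k \<in> {..<d}" "g \<in> {..<d}" "a \<in> {..<d}"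
      then have "c a g k = - c g a k" using c_antisym[of a g k] by simp
      then show "sc (c a g k) * (xx k * (dd g * dd a)) = - (sc (c g a k) * (xx k * (dd g * dd a)))"
        by (simp add: sc_uminus)
    qed
    finally show ?thesis by (simp add: U_def sum_negf)
  qed
  have "U + U = U - (\<Sum>a<d. \<Sum>g<d. \<Sum>k<d. sc (c a g k) * (xx k * (dd g * dd a)))"
    using U' by simp
  also have "\<dots> = (\<Sum>a<d. \<Sum>g<d. \<Sum>k<d. sc (c a g k) * (xx k * br (dd a) (dd g)))"
    by (simp add: U_def br_def sum_subtractf[symmetric] algebra_simps)
  finally have "inI (U + U)"
    using rel_dd eqI_def by (auto intro!: inI_sum inI_scmul inI_mul_l)
  then have "inI U" by (rule inI_half)
  then have "inI T" using V TUV by (simp add: inI_add)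
  then show ?thesis unfolding e by (intro inJ_diff q inI_inJ)
qed

end


definition prodw :: "('v \<Rightarrow> 'w ps) \<Rightarrow> 'v list \<Rightarrow> 'w ps" where
  "prodw g w = foldr (\<lambda>v acc. g v * acc) w 1"
definition Phi :: "('v \<Rightarrow> 'w ps) \<Rightarrow> 'v fa \<Rightarrow> 'w ps" where
  "Phi g f = (\<Sum>w\<in>{w. f w \<noteq> 0}. sc (f w) * prodw g w)"
definition mnm :: "'v list \<Rightarrow> 'v ps" where "mnm u = PS (\<lambda>w. if w = u then 1 else 0)"

lemma prodw_append: "prodw g (u @ v) = prodw g u * prodw g v"
  by (induction u) (auto simp: prodw_def mult.assoc)

lemma prodw_single: "prodw g [v] = g v" by (simp add: prodw_def)

lemma Phi_eq: "finite S \<Longrightarrow> {w. f w \<noteq> 0} \<subseteq> S \<Longrightarrow> Phi g f = (\<Sum>w\<in>S. sc (f w) * prodw g w)"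
  unfolding Phi_def by (rule sum.mono_neutral_left) auto

lemma Phi_add: "f \<in> fa_fin \<Longrightarrow> h \<in> fa_fin \<Longrightarrow> Phi g (fa_add f h) = Phi g f + Phi g h"
proof -
  assume f: "f \<in> fa_fin" and h: "h \<in> fa_fin"
  let ?S = "{w. f w \<noteq> 0} \<union> {w. h w \<noteq> 0}"
  have fS: "finite ?S" using f h by (simp add: fa_fin_def)
  have s: "{w. fa_add f h w \<noteq> 0} \<subseteq> ?S" by (auto simp: fa_add_def)
  show ?thesis
    using Phi_eq[OF fS s, of g] Phi_eq[OF fS, of f g] Phi_eq[OF fS, of h g]
    by (auto simp: fa_add_def sc_add distrib_right sum.distrib)
qed

lemma Phi_smult: "Phi g (fa_smult s f) = sc s * Phi g f"
proof (cases "s = 0")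
  case True then show ?thesis by (simp add: Phi_def fa_smult_def)
next
  case False
  then have "{w. fa_smult s f w \<noteq> 0} = {w. f w \<noteq> 0}" by (auto simp: fa_smult_def)
  then show ?thesis by (simp add: Phi_def fa_smult_def sum_distrib_left sc_mult mult.assoc)
qed

lemma Phi_zero: "Phi g fa_zero = 0" by (simp add: Phi_def fa_zero_def)

lemma coef_sum: "coef (sum p A) w = (\<Sum>i\<in>A. coef (p i) w)"
proof -
  have "sum p A = PS (fa_sum (\<lambda>i. coef (p i)) A)" by (simp add: PS_sum)
  then show ?thesis by (simp add: fa_sum_def)
qed

lemma expand: "f \<in> fa_fin \<Longrightarrow> PS f = (\<Sum>u\<in>{u. f u \<noteq> 0}. sc (f u) * mnm u)"
proof (rule ps_eqI, rule ext)
  fix w assume f: "f \<in> fa_fin"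
  have "coef (\<Sum>u\<in>{u. f u \<noteq> 0}. sc (f u) * mnm u) w = (\<Sum>u\<in>{u. f u \<noteq> 0}. f u * (if w = u then 1 else 0))"
    by (simp add: coef_sum fa_mul_scl mnm_def fa_smult_def)
  also have "\<dots> = f w"
    using f by (simp add: fa_fin_def if_distrib[of "\<lambda>x. _ * x"] sum.delta cong: if_cong)
  finally show "coef (PS f) w = coef (\<Sum>u\<in>{u. f u \<noteq> 0}. sc (f u) * mnm u) w" by simp
qed

lemma mono_mul: "mnm u * mnm v = mnm (u @ v)"
proof (rule ps_eqI, rule ext)
  fix w
  have "fa_mul (\<lambda>w. if w = u then 1 else 0) (\<lambda>w. if w = v then 1 else 0) w
      = (\<Sum>k\<le>length w. if k = length u then (if w = u @ v then 1 else 0) else 0)"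
    unfolding fa_mul_def
  proof (intro sum.cong refl)
    fix k assume k: "k \<in> {..length w}"
    have "(take k w = u \<and> drop k w = v) \<longleftrightarrow> (k = length u \<and> w = u @ v)"
    proof
      assume H: "take k w = u \<and> drop k w = v"
      have "length u = k" using H k by auto
      moreover have "w = u @ v" using H append_take_drop_id[of k w] by simp
      ultimately show "k = length u \<and> w = u @ v" by simp
    next
      assume "k = length u \<and> w = u @ v"
      then show "take k w = u \<and> drop k w = v" by simp
    qed
    note E = this
    have l: "(if take k w = u then 1 else 0) * (if drop k w = v then 1 else 0)
        = (if take k w = u \<and> drop k w = v then 1 else (0::complex))" by simp
    have r: "(if k = length u then (if w = u @ v then 1 else 0) else (0::complex))
        = (if k = length u \<and> w = u @ v then 1 else 0)" by simp
    show "(if take k w = u then 1 else 0) * (if drop k w = v then 1 else 0)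
        = (if k = length u then (if w = u @ v then 1 else 0) else (0::complex))"
      by (simp only: l r E)
  qed
  also have "\<dots> = (if w = u @ v then 1 else 0)" by (auto simp: sum.delta)
  finally show "coef (mnm u * mnm v) w = coef (mnm (u @ v)) w" by (simp add: mnm_def)
qed

lemma fin_mono[simp]: "fin (mnm u)" by (simp add: mnm_def fa_fin_def)

lemma Phi_mono: "Phi g (coef (mnm u)) = prodw g u"
proof -
  have "{w. coef (mnm u) w \<noteq> 0} = {u}" by (auto simp: mnm_def)
  then show ?thesis by (simp add: Phi_def mnm_def)
qed

lemma Phi_sum: "(\<And>i. i \<in> A \<Longrightarrow> fin (p i)) \<Longrightarrow> Phi g (coef (sum p A)) = (\<Sum>i\<in>A. Phi g (coef (p i)))"
proof (induction A rule: infinite_finite_induct)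
  case (infinite A) then show ?case by (simp add: Phi_zero)
next
  case empty then show ?case by (simp add: Phi_zero)
next
  case (insert x F)
  then show ?case by (simp add: Phi_add fin_def[symmetric])
qed

lemma sc_comm: "x * (sc b * y) = sc b * (x * y)"
  by (simp add: mult.assoc[symmetric] sc_central[of b x])

lemma sc_pair: "sc a * x * (sc b * y) = sc (a * b) * (x * y)"
proof -
  have "x * (sc b * y) = sc b * (x * y)" by (rule sc_comm)
  then show ?thesis by (simp add: mult.assoc sc_mult)
qed

lemma Phi_mul: "f \<in> fa_fin \<Longrightarrow> h \<in> fa_fin \<Longrightarrow> Phi g (fa_mul f h) = Phi g f * Phi g h"
proof -
  assume f: "f \<in> fa_fin" and h: "h \<in> fa_fin"
  let ?A = "{u. f u \<noteq> 0}" and ?B = "{v. h v \<noteq> 0}"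
  have "PS (fa_mul f h) = PS f * PS h" by (simp add: PS_mul)
  also have "\<dots> = (\<Sum>v\<in>?B. \<Sum>u\<in>?A. sc (f u * h v) * mnm (u @ v))"
    unfolding expand[OF f] expand[OF h] sum_distrib_left sum_distrib_right
    by (intro sum.cong refl) (simp add: sc_pair mono_mul)
  finally have e: "fa_mul f h = coef (\<Sum>v\<in>?B. \<Sum>u\<in>?A. sc (f u * h v) * mnm (u @ v))"
    by (metis ps.sel)
  have "Phi g (fa_mul f h) = (\<Sum>v\<in>?B. \<Sum>u\<in>?A. Phi g (coef (sc (f u * h v) * mnm (u @ v))))"
    unfolding e by (simp add: Phi_sum)
  also have "\<dots> = (\<Sum>v\<in>?B. \<Sum>u\<in>?A. sc (f u) * prodw g u * (sc (h v) * prodw g v))"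
    by (intro sum.cong refl) (simp add: coef_sc_mul Phi_smult Phi_mono prodw_append sc_pair del: coef_mul)
  also have "\<dots> = Phi g f * Phi g h"
    by (simp add: Phi_def sum_distrib_left sum_distrib_right)
  finally show ?thesis .
qed

lemma Phi_gen: "Phi g (fa_gen v) = g v"
proof -
  have "{w. fa_gen v w \<noteq> 0} = {[v]}" by (auto simp: fa_gen_def)
  then show ?thesis by (simp add: Phi_def fa_gen_def prodw_single)
qed

lemma Phi_sub: "f \<in> fa_fin \<Longrightarrow> h \<in> fa_fin \<Longrightarrow> Phi g (fa_sub f h) = Phi g f - Phi g h"
proof -
  assume f: "f \<in> fa_fin" and h: "h \<in> fa_fin"
  have "fa_sub f h = fa_add f (fa_smult (-1) h)" by (simp add: fa_sub_def fa_add_def fa_smult_def fun_eq_iff)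
  then show ?thesis using f h fa_fin_smult[OF h] by (simp add: Phi_add Phi_smult sc_uminus)
qed

lemma Phi_br: "f \<in> fa_fin \<Longrightarrow> h \<in> fa_fin \<Longrightarrow> Phi g (fa_br f h) = br (Phi g f) (Phi g h)"
  by (simp add: fa_br_def Phi_sub Phi_mul fa_fin_mul br_def)

lemma Phi_fa_sum: "(\<And>i. i \<in> A \<Longrightarrow> F i \<in> fa_fin) \<Longrightarrow> Phi g (fa_sum F A) = (\<Sum>i\<in>A. Phi g (F i))"
proof -
  assume a: "\<And>i. i \<in> A \<Longrightarrow> F i \<in> fa_fin"
  have "fa_sum F A = coef (\<Sum>i\<in>A. PS (F i))" by (metis PS_sum ps.sel)
  then show ?thesis using a by (simp add: Phi_sum)
qed

lemma fin_Phi: "fin (Phi g f) \<or> \<not> (\<forall>v. fin (g v))"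
proof (cases "\<forall>v. fin (g v)")
  case True
  have "fin (prodw g w)" for w using True by (induction w) (auto simp: prodw_def)
  then show ?thesis by (simp add: Phi_def)
qed simp


lemma fa_sub_eq: "fa_sub x y = fa_add x (fa_smult (-1) y)"
  by (simp add: fa_sub_def fa_add_def fa_smult_def fun_eq_iff)

lemma subsp_sub: "fa_subspace K \<Longrightarrow> x \<in> K \<Longrightarrow> y \<in> K \<Longrightarrow> fa_sub x y \<in> K"
  unfolding fa_sub_eq fa_subspace_def by blast

lemma subsp_sum: "fa_subspace K \<Longrightarrow> (\<And>i. i \<in> A \<Longrightarrow> F i \<in> K) \<Longrightarrow> fa_sum F A \<in> K"
proof (induction A rule: infinite_finite_induct)
  case (infinite A)
  then have "fa_sum F A = fa_zero" by (simp add: fa_sum_def fa_zero_def fun_eq_iff)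
  then show ?case using infinite by (simp add: fa_subspace_def)
next
  case empty
  then have "fa_sum F {} = fa_zero" by (simp add: fa_sum_def fa_zero_def fun_eq_iff)
  then show ?case using empty by (simp add: fa_subspace_def)
next
  case (insert x A)
  then have "fa_sum F (insert x A) = fa_add (F x) (fa_sum F A)" by (simp add: fa_sum_def fa_add_def fun_eq_iff)
  then show ?case using insert by (simp add: fa_subspace_def)
qed

lemma tgens_fin: "fa_gen ` t_gens n \<subseteq> fa_fin" by auto

lemma tL_lie: "lie_sub (tL n)" unfolding tL_def by (rule lie_sub_gen_sub[OF tgens_fin])
lemma tL_sub: "fa_subspace (tL n)" using tL_lie by (simp add: lie_sub_def)
lemma tL_fin: "u \<in> tL n \<Longrightarrow> u \<in> fa_fin" using tL_sub[of n] by (auto simp: fa_subspace_def)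
lemma tL_gen: "v \<in> t_gens n \<Longrightarrow> fa_gen v \<in> tL n"
  using lie_sub_gen_sup[of "fa_gen ` t_gens n"] unfolding tL_def by auto
lemma tL_add: "x \<in> tL n \<Longrightarrow> y \<in> tL n \<Longrightarrow> fa_add x y \<in> tL n" using tL_sub by (simp add: fa_subspace_def)
lemma tL_smult: "x \<in> tL n \<Longrightarrow> fa_smult s x \<in> tL n" using tL_sub by (simp add: fa_subspace_def)
lemma tL_zero: "fa_zero \<in> tL n" using tL_sub by (simp add: fa_subspace_def)
lemma tL_br: "x \<in> tL n \<Longrightarrow> y \<in> tL n \<Longrightarrow> fa_br x y \<in> tL n" using tL_lie by (simp add: lie_sub_def)
lemma tL_subtr: "x \<in> tL n \<Longrightarrow> y \<in> tL n \<Longrightarrow> fa_sub x y \<in> tL n" by (rule subsp_sub[OF tL_sub])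
lemma tL_sum: "(\<And>i. i \<in> A \<Longrightarrow> F i \<in> tL n) \<Longrightarrow> fa_sum F A \<in> tL n" by (rule subsp_sum[OF tL_sub])

lemma tx_tL: "i \<in> {1..n} \<Longrightarrow> tx i \<in> tL n" by (rule tL_gen) (auto simp: t_gens_def)
lemma ty_tL: "i \<in> {1..n} \<Longrightarrow> ty i \<in> tL n" by (rule tL_gen) (auto simp: t_gens_def)
lemma tt_tL: "i \<in> {1..n} \<Longrightarrow> j \<in> {1..n} \<Longrightarrow> i \<noteq> j \<Longrightarrow> tt i j \<in> tL n" by (rule tL_gen) (auto simp: t_gens_def)

lemma trels_tL: "t_rels n \<subseteq> tL n"
proof -
  have s: "fa_sum tx {1..n} \<in> tL n" "fa_sum ty {1..n} \<in> tL n"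
    by (auto intro!: tL_sum tx_tL ty_tL)
  show ?thesis unfolding t_rels_def
    apply (intro Un_least)
               apply (auto intro!: tL_subtr tL_br tL_add tL_sum tx_tL ty_tL tt_tL s)
    done
qed

lemma tR_ideal: "lie_ideal_in (tL n) (tR n)" unfolding tR_def by (rule lie_ideal_gen_ideal[OF tL_lie trels_tL])
lemma tR_sub: "fa_subspace (tR n)" using tR_ideal by (simp add: lie_ideal_in_def)
lemma tR_tL: "tR n \<subseteq> tL n" using tR_ideal by (simp add: lie_ideal_in_def)
lemma tR_min: "lie_ideal_in (tL n) K \<Longrightarrow> t_rels n \<subseteq> K \<Longrightarrow> tR n \<subseteq> K"
  unfolding tR_def by (rule lie_ideal_gen_min)


context An begin

definition img :: "tgen \<Rightarrow> agen ps" where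
  "img v = (case v of TX i \<Rightarrow> XX i | TY i \<Rightarrow> YY i | TT i j \<Rightarrow> Tm i j)"

lemma img_simps[simp]: "img (TX i) = XX i" "img (TY i) = YY i" "img (TT i j) = Tm i j"
  by (simp_all add: img_def)

lemma fin_img: "fin (img v)"
  by (cases v) (simp_all add: XX_def YY_def Tm_def)

lemma fin_PhiA[simp]: "fin (Phi img u)"
  using fin_Phi[of img u] fin_img by blast

lemma Phi_tx: "Phi img (tx i) = XX i" by (simp add: Phi_gen)
lemma Phi_ty: "Phi img (ty i) = YY i" by (simp add: Phi_gen)
lemma Phi_tt: "Phi img (tt i j) = Tm i j" by (simp add: Phi_gen)

lemma gen_N: "v \<in> t_gens n \<Longrightarrow> inN (img v)"
  unfolding t_gens_def
  apply (auto intro!: inN_gen simp: XX_def YY_def Tm_def)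
    apply (rule N1[unfolded XX_def]; simp)
   apply (rule N2[unfolded YY_def]; simp)
  apply (rule N3[unfolded Tm_def]; simp)
  done

lemma tL_N: "u \<in> tL n \<Longrightarrow> inN (Phi img u)"
proof -
  let ?K = "{u \<in> fa_fin. inN (Phi img u)}"
  have "lie_sub ?K"
    unfolding lie_sub_def fa_subspace_def
    by (auto simp: Phi_zero inN_zero Phi_add Phi_smult Phi_br fa_fin_add fa_fin_smult fa_fin_br
             intro: inN_add inN_scmul inN_br fa_fin_zero)
  moreover have "fa_gen ` t_gens n \<subseteq> ?K" using gen_N by (auto simp: Phi_gen)
  ultimately have "tL n \<subseteq> ?K" unfolding tL_def by (rule lie_sub_gen_min)
  then show "u \<in> tL n \<Longrightarrow> inN (Phi img u)" by blast
qed

lemmas phisimps = Phi_sub Phi_br Phi_add Phi_fa_sum Phi_gen fa_fin_br fa_fin_add fa_fin_sub fa_fin_sum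

lemma br_self: "br p p = 0" by (simp add: br_def)

lemma R5J: "i \<in> {1..n} \<Longrightarrow> j \<in> {1..n} \<Longrightarrow> inJ (br (XX i) (XX j))"
  by (cases "i = j") (simp add: br_self inJ_zero, rule inI_inJ, rule R5, auto)
lemma R6J: "i \<in> {1..n} \<Longrightarrow> j \<in> {1..n} \<Longrightarrow> inJ (br (YY i) (YY j))"
  by (cases "i = j") (simp add: br_self inJ_zero, rule inI_inJ, rule R6, auto)

lemmas RJ = R1[THEN inI_inJ] R2[THEN inI_inJ] R3[THEN inI_inJ] R4[THEN inI_inJ] R5J R6J
  R8[THEN inI_inJ] R9[THEN inI_inJ] R10[THEN inI_inJ] R11[THEN inI_inJ] R7 R12x R12y

lemma rels_J: "r \<in> t_rels n \<Longrightarrow> inJ (Phi img r)"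
  unfolding t_rels_def
  apply (elim UnE)
             apply (auto simp: phisimps intro!: RJ)
  using R7 R12x R12y by auto

lemma tR_J: "u \<in> tR n \<Longrightarrow> inJ (Phi img u)"
proof -
  let ?K = "{u \<in> tL n. inJ (Phi img u)}"
  have "lie_ideal_in (tL n) ?K"
    unfolding lie_ideal_in_def fa_subspace_def
  proof (intro conjI ballI allI)
    show "?K \<subseteq> fa_fin" using tL_fin by blast
    show "fa_zero \<in> ?K" by (simp add: tL_zero Phi_zero inJ_zero)
    show "?K \<subseteq> tL n" by blast
  next
    fix x y assume "x \<in> ?K" "y \<in> ?K"
    then show "fa_add x y \<in> ?K" by (auto simp: Phi_add tL_fin intro: tL_add inJ_add)
  next
    fix s x assume "x \<in> ?K"
    then show "fa_smult s x \<in> ?K" by (auto simp: Phi_smult intro: tL_smult inJ_scmul)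
  next
    fix x k assume x: "x \<in> tL n" and k: "k \<in> ?K"
    have "inJ (Phi img x * Phi img k - Phi img k * Phi img x)"
      using x k tL_N[OF x] by (intro inJ_diff inJ_mul_l inJ_mul_N) auto
    then show "fa_br x k \<in> ?K" using x k by (auto simp: Phi_br tL_fin br_def intro: tL_br)
  qed
  moreover have "t_rels n \<subseteq> ?K" using trels_tL rels_J by blast
  ultimately have "tR n \<subseteq> ?K" by (rule tR_min)
  then show "u \<in> tR n \<Longrightarrow> inJ (Phi img u)" by blast
qed

end


context An begin

lemma inJ_coef: "inJ (PS j) \<longleftrightarrow> j \<in> JJ" by (simp add: inJ_def)

lemma cosH_self: "p \<in> cosH d c n p"
proof -
  have "fa_zero \<in> JJ" using JJ_sub by (simp add: fa_subspace_def)
  moreover have "fa_add p fa_zero = p" by (simp add: fa_add_def fa_zero_def)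
  ultimately show ?thesis unfolding cosH_def by force
qed

lemma cosH_mem: "x \<in> cosH d c n (coef P) \<Longrightarrow> inJ (PS x - P)"
proof -
  assume "x \<in> cosH d c n (coef P)"
  then obtain j where j: "j \<in> JJ" "x = fa_add (coef P) j" unfolding cosH_def by blast
  then have "PS x - P = PS j" by (simp add: PS_add)
  then show ?thesis using j by (simp add: inJ_coef)
qed

lemma cosH_sub: "inJ (P - Q) \<Longrightarrow> cosH d c n (coef P) \<subseteq> cosH d c n (coef Q)"
proof
  fix x assume pq: "inJ (P - Q)" and xm: "x \<in> cosH d c n (coef P)"
  from xm have "inJ (PS x - P)" by (rule cosH_mem)
  then have "inJ ((PS x - P) + (P - Q))" using pq by (rule inJ_add)
  then have "coef (PS x - Q) \<in> JJ" by (simp add: inJ_def)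
  moreover have "x = fa_add (coef Q) (coef (PS x - Q))" by (simp add: fa_add_def fa_sub_def fun_eq_iff)
  ultimately show "x \<in> cosH d c n (coef Q)" unfolding cosH_def by blast
qed

lemma cosH_eqP: "inJ (P - Q) \<Longrightarrow> cosH d c n (coef P) = cosH d c n (coef Q)"
proof
  assume pq: "inJ (P - Q)"
  then show "cosH d c n (coef P) \<subseteq> cosH d c n (coef Q)" by (rule cosH_sub)
  have "inJ (Q - P)" using inJ_uminus[OF pq] by simp
  then show "cosH d c n (coef Q) \<subseteq> cosH d c n (coef P)" by (rule cosH_sub)
qed

lemma cosT_self: "u \<in> cosT n u"
proof -
  have "fa_zero \<in> tR n" using tR_sub by (simp add: fa_subspace_def)
  moreover have "fa_add u fa_zero = u" by (simp add: fa_add_def fa_zero_def)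
  ultimately show ?thesis unfolding cosT_def by force
qed

lemma cosT_diff: "cosT n u = cosT n v \<Longrightarrow> fa_sub u v \<in> tR n"
proof -
  assume "cosT n u = cosT n v"
  then have "u \<in> cosT n v" using cosT_self by blast
  then obtain r where r: "r \<in> tR n" "u = fa_add v r" unfolding cosT_def by blast
  then have "fa_sub u v = r" by (simp add: fa_add_def fa_sub_def fun_eq_iff)
  then show ?thesis using r by simp
qed

definition phi :: "tgen fa set \<Rightarrow> agen fa set" where
  "phi U = (if U \<in> tbar n then cosH d c n (coef (Phi img (SOME u. u \<in> tL n \<and> U = cosT n u))) else {})"

lemma phi_cosT: "u \<in> tL n \<Longrightarrow> phi (cosT n u) = cosH d c n (coef (Phi img u))"
proof -
  assume u: "u \<in> tL n"
  then have T: "cosT n u \<in> tbar n" by (simp add: tbar_def)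
  define u' where "u' = (SOME u'. u' \<in> tL n \<and> cosT n u = cosT n u')"
  have "u' \<in> tL n \<and> cosT n u = cosT n u'" unfolding u'_def by (rule someI[of _ u]) (simp add: u)
  then have u': "u' \<in> tL n" "cosT n u' = cosT n u" by auto
  then have "fa_sub u' u \<in> tR n" by (intro cosT_diff)
  then have "inJ (Phi img (fa_sub u' u))" by (rule tR_J)
  then have "inJ (Phi img u' - Phi img u)" using u u' by (simp add: Phi_sub tL_fin)
  then have "cosH d c n (coef (Phi img u')) = cosH d c n (coef (Phi img u))" by (rule cosH_eqP)
  then show ?thesis using T by (simp add: phi_def u'_def)
qed

lemma br_J: "inN a \<Longrightarrow> inN b \<Longrightarrow> inJ (P - a) \<Longrightarrow> inJ (Q - b) \<Longrightarrow> inJ (br a b - br P Q)"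
proof -
  assume a: "inN a" and b: "inN b" and p: "inJ (P - a)" and q: "inJ (Q - b)"
  define jp where "jp = P - a"
  define jq where "jq = Q - b"
  have P: "P = a + jp" and Q: "Q = b + jq" by (simp_all add: jp_def jq_def)
  have e: "br a b - br P Q = - ((a * jq - jq * a) + (jp * b - b * jp) + (jp * jq - jq * jp))"
    unfolding P Q br_def by (simp add: algebra_simps)
  have fa: "fin a" "fin b" using a b inN_fin by auto
  have j: "inJ jp" "inJ jq" using p q by (simp_all add: jp_def jq_def)
  have fj: "fin jp" "fin jq" using j inJ_fin by auto
  have "inJ (- ((a * jq - jq * a) + (jp * b - b * jp) + (jp * jq - jq * jp)))"
    using fa fj j a b
    by (intro inJ_add inJ_uminus inJ_diff inJ_mul_l inJ_mul_N) auto
  then show ?thesis using e by simp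
qed

lemma phi_hom: "lie_hom_tH d c n phi"
  unfolding lie_hom_tH_def
proof (intro conjI ballI allI impI)
  fix U assume "U \<in> tbar n"
  then obtain u where u: "u \<in> tL n" "U = cosT n u" by (auto simp: tbar_def)
  then have "coef (Phi img u) \<in> Nnorm d c n" using tL_N[OF u(1)] by (simp add: inN_def)
  then show "phi U \<in> Hecke d c n" using u phi_cosT by (simp add: Hecke_def)
next
  fix U assume "U \<notin> tbar n"
  then show "phi U = {}" by (simp add: phi_def)
next
  fix u v p q assume u: "u \<in> tL n" and v: "v \<in> tL n" and p: "p \<in> phi (cosT n u)" and q: "q \<in> phi (cosT n v)"
  have jp: "inJ (PS p - Phi img u)" using p u by (simp add: phi_cosT cosH_mem)
  have jq: "inJ (PS q - Phi img v)" using q v by (simp add: phi_cosT cosH_mem)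
  have fu: "u \<in> fa_fin" "v \<in> fa_fin" using u v tL_fin by auto
  have "phi (cosT n (fa_add u v)) = cosH d c n (coef (Phi img u + Phi img v))"
    using u v fu by (simp add: phi_cosT tL_add Phi_add)
  also have "\<dots> = cosH d c n (coef (PS p + PS q))"
  proof (rule cosH_eqP)
    have "inJ (- ((PS p - Phi img u) + (PS q - Phi img v)))" using jp jq by (intro inJ_uminus inJ_add)
    then show "inJ (Phi img u + Phi img v - (PS p + PS q))" by (simp add: algebra_simps)
  qed
  finally show "phi (cosT n (fa_add u v)) = cosH d c n (fa_add p q)" by simp
  have "phi (cosT n (fa_br u v)) = cosH d c n (coef (br (Phi img u) (Phi img v)))"
    using u v fu by (simp add: phi_cosT tL_br Phi_br)
  also have "\<dots> = cosH d c n (coef (br (PS p) (PS q)))"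
    using tL_N[OF u] tL_N[OF v] jp jq by (intro cosH_eqP br_J) auto
  finally show "phi (cosT n (fa_br u v)) = cosH d c n (fa_br p q)" by (simp add: br_def fa_br_def)
next
  fix u p s assume u: "u \<in> tL n" and p: "p \<in> phi (cosT n u)"
  have jp: "inJ (PS p - Phi img u)" using p u by (simp add: phi_cosT cosH_mem)
  have "phi (cosT n (fa_smult s u)) = cosH d c n (coef (sc s * Phi img u))"
    using u by (simp add: phi_cosT tL_smult Phi_smult)
  also have "\<dots> = cosH d c n (coef (sc s * PS p))"
  proof (rule cosH_eqP)
    have "inJ (sc s * - (PS p - Phi img u))" using jp by (intro inJ_scmul inJ_uminus)
    then show "inJ (sc s * Phi img u - sc s * PS p)" by (simp add: algebra_simps)
  qed
  finally show "phi (cosT n (fa_smult s u)) = cosH d c n (fa_smult s p)" by (simp add: fa_mul_scl)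
qed

end


context An begin

lemma XX_PS: "coef (XX i) = fa_sum (\<lambda>\<alpha>. fa_mul (fa_gen (Xg \<alpha>)) (fa_gen (Eg \<alpha> i))) {..<d}"
proof -
  have "XX i = PS (fa_sum (\<lambda>\<alpha>. fa_mul (fa_gen (Xg \<alpha>)) (fa_gen (Eg \<alpha> i))) {..<d})"
    by (simp add: XX_def PS_sum PS_mul xx_def ee_def)
  then show ?thesis by simp
qed

lemma YY_PS: "coef (YY i) = fa_smult (-1) (fa_sum (\<lambda>\<alpha>. fa_mul (fa_gen (Dg \<alpha>)) (fa_gen (Eg \<alpha> i))) {..<d})"
proof -
  have "YY i = PS (fa_smult (-1) (fa_sum (\<lambda>\<alpha>. fa_mul (fa_gen (Dg \<alpha>)) (fa_gen (Eg \<alpha> i))) {..<d}))"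
    by (simp add: YY_def PS_sum PS_mul PS_smult dd_def ee_def)
  then show ?thesis by simp
qed

lemma Tm_PS: "coef (Tm i j) = fa_sum (\<lambda>\<alpha>. fa_mul (fa_gen (Eg \<alpha> i)) (fa_gen (Eg \<alpha> j))) {..<d}"
proof -
  have "Tm i j = PS (fa_sum (\<lambda>\<alpha>. fa_mul (fa_gen (Eg \<alpha> i)) (fa_gen (Eg \<alpha> j))) {..<d})"
    by (simp add: Tm_def PS_sum PS_mul ee_def)
  then show ?thesis by simp
qed

abbreviation gens_ok :: "(tgen fa set \<Rightarrow> agen fa set) \<Rightarrow> bool" where
  "gens_ok \<phi> \<equiv> (\<forall>i\<in>{1..n}. \<phi> (cosT n (fa_gen (TX i))) =
          cosH d c n (fa_sum (\<lambda>\<alpha>. fa_mul (fa_gen (Xg \<alpha>)) (fa_gen (Eg \<alpha> i))) {..<d}))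
    \<and> (\<forall>i\<in>{1..n}. \<phi> (cosT n (fa_gen (TY i))) =
          cosH d c n (fa_smult (-1) (fa_sum (\<lambda>\<alpha>. fa_mul (fa_gen (Dg \<alpha>)) (fa_gen (Eg \<alpha> i))) {..<d})))
    \<and> (\<forall>i\<in>{1..n}. \<forall>j\<in>{1..n}. i \<noteq> j \<longrightarrow> \<phi> (cosT n (fa_gen (TT i j))) =
          cosH d c n (fa_sum (\<lambda>\<alpha>. fa_mul (fa_gen (Eg \<alpha> i)) (fa_gen (Eg \<alpha> j))) {..<d}))"

lemma phi_gens: "gens_ok phi"
proof (intro conjI ballI impI)
  fix i assume i: "i \<in> {1..n}"
  show "phi (cosT n (fa_gen (TX i))) = cosH d c n (fa_sum (\<lambda>\<alpha>. fa_mul (fa_gen (Xg \<alpha>)) (fa_gen (Eg \<alpha> i))) {..<d})"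
    by (simp only: phi_cosT[OF tx_tL[OF i]] Phi_gen img_simps XX_PS)
  show "phi (cosT n (fa_gen (TY i))) = cosH d c n (fa_smult (-1) (fa_sum (\<lambda>\<alpha>. fa_mul (fa_gen (Dg \<alpha>)) (fa_gen (Eg \<alpha> i))) {..<d}))"
    by (simp only: phi_cosT[OF ty_tL[OF i]] Phi_gen img_simps YY_PS)
next
  fix i j assume i: "i \<in> {1..n}" and j: "j \<in> {1..n}" and ij: "i \<noteq> j"
  show "phi (cosT n (fa_gen (TT i j))) = cosH d c n (fa_sum (\<lambda>\<alpha>. fa_mul (fa_gen (Eg \<alpha> i)) (fa_gen (Eg \<alpha> j))) {..<d})"
    by (simp only: phi_cosT[OF tt_tL[OF i j ij]] Phi_gen img_simps Tm_PS)
qed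

lemma uniq: "lie_hom_tH d c n \<psi> \<Longrightarrow> gens_ok \<psi> \<Longrightarrow> \<psi> = phi"
proof -
  assume hom: "lie_hom_tH d c n \<psi>" and g: "gens_ok \<psi>"
  note hh = hom[unfolded lie_hom_tH_def]
  note H1 = hh[THEN conjunct1, rule_format]
  note H2 = hh[THEN conjunct2, THEN conjunct1, rule_format]
  note H3 = hh[THEN conjunct2, THEN conjunct2, THEN conjunct1, rule_format]
  note H4 = hh[THEN conjunct2, THEN conjunct2, THEN conjunct2, rule_format]
  let ?K = "{u \<in> tL n. \<psi> (cosT n u) = cosH d c n (coef (Phi img u))}"
  have "lie_sub ?K"
    unfolding lie_sub_def fa_subspace_def
  proof (intro conjI ballI allI)
    show "?K \<subseteq> fa_fin" using tL_fin by blast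
  next
    have z: "fa_zero \<in> tL n" by (rule tL_zero)
    have "cosT n fa_zero \<in> tbar n" using z by (simp add: tbar_def)
    then obtain r where "\<psi> (cosT n fa_zero) = cosH d c n r" using H1 by (auto simp: Hecke_def)
    then have r: "r \<in> \<psi> (cosT n fa_zero)" using cosH_self by simp
    have "\<psi> (cosT n (fa_smult 0 fa_zero)) = cosH d c n (fa_smult 0 r)" by (rule H4[OF z r])
    moreover have "fa_smult 0 (fa_zero :: tgen fa) = fa_zero" by (simp add: fa_smult_def fa_zero_def)
    moreover have "fa_smult 0 r = coef (Phi img fa_zero)"
      by (simp add: Phi_zero) (simp add: fa_smult_def fa_zero_def)
    ultimately show "fa_zero \<in> ?K" using z by simp
  next
    fix u v assume u: "u \<in> ?K" and v: "v \<in> ?K"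
    then have p: "coef (Phi img u) \<in> \<psi> (cosT n u)" and q: "coef (Phi img v) \<in> \<psi> (cosT n v)"
      using cosH_self by auto
    have "\<psi> (cosT n (fa_add u v)) = cosH d c n (fa_add (coef (Phi img u)) (coef (Phi img v)))"
      using H3[OF _ _ p q] u v by blast
    moreover have uv: "u \<in> tL n" "v \<in> tL n" using u v by auto
    moreover have "Phi img (fa_add u v) = Phi img u + Phi img v"
      by (rule Phi_add[OF tL_fin[OF uv(1)] tL_fin[OF uv(2)]])
    ultimately show "fa_add u v \<in> ?K" by (simp add: tL_add)
  next
    fix s u assume u: "u \<in> ?K"
    then have p: "coef (Phi img u) \<in> \<psi> (cosT n u)" using cosH_self by auto
    have "\<psi> (cosT n (fa_smult s u)) = cosH d c n (fa_smult s (coef (Phi img u)))"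
      using H4[OF _ p] u by blast
    then show "fa_smult s u \<in> ?K" using u by (simp add: tL_smult Phi_smult fa_mul_scl)
  next
    fix u v assume u: "u \<in> ?K" and v: "v \<in> ?K"
    then have p: "coef (Phi img u) \<in> \<psi> (cosT n u)" and q: "coef (Phi img v) \<in> \<psi> (cosT n v)"
      using cosH_self by auto
    have "\<psi> (cosT n (fa_br u v)) = cosH d c n (fa_br (coef (Phi img u)) (coef (Phi img v)))"
      using H3[OF _ _ p q] u v by blast
    moreover have uv: "u \<in> tL n" "v \<in> tL n" using u v by auto
    moreover have "fa_br (coef (Phi img u)) (coef (Phi img v)) = coef (Phi img (fa_br u v))"
      by (simp only: Phi_br[OF tL_fin[OF uv(1)] tL_fin[OF uv(2)]]) (simp add: br_def fa_br_def)
    ultimately show "fa_br u v \<in> ?K" using u v by (simp add: tL_br)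
  qed
  moreover have "fa_gen ` t_gens n \<subseteq> ?K"
  proof
    fix x assume "x \<in> fa_gen ` t_gens n"
    then obtain v where v: "v \<in> t_gens n" "x = fa_gen v" by blast
    from v(1) consider (X) i where "v = TX i" "i \<in> {1..n}" | (Y) i where "v = TY i" "i \<in> {1..n}"
      | (T) i j where "v = TT i j" "i \<in> {1..n}" "j \<in> {1..n}" "i \<noteq> j"
      unfolding t_gens_def by blast
    then show "x \<in> ?K"
    proof cases
      case X
      have "\<psi> (cosT n (fa_gen (TX i))) = cosH d c n (coef (XX i))"
        unfolding XX_PS using g X(2) by blast
      then show ?thesis using X v(2) tx_tL[OF X(2)] by (simp add: Phi_gen)
    next
      case Y
      have "\<psi> (cosT n (fa_gen (TY i))) = cosH d c n (coef (YY i))"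
        unfolding YY_PS using g Y(2) by blast
      then show ?thesis using Y v(2) ty_tL[OF Y(2)] by (simp add: Phi_gen)
    next
      case T
      have "\<psi> (cosT n (fa_gen (TT i j))) = cosH d c n (coef (Tm i j))"
        unfolding Tm_PS using g T(2,3,4) by blast
      then show ?thesis using T v(2) tt_tL[OF T(2,3,4)] by (simp add: Phi_gen)
    qed
  qed
  ultimately have K: "tL n \<subseteq> ?K" unfolding tL_def by (rule lie_sub_gen_min)
  show "\<psi> = phi"
  proof
    fix U show "\<psi> U = phi U"
    proof (cases "U \<in> tbar n")
      case True
      then obtain u where u: "u \<in> tL n" "U = cosT n u" by (auto simp: tbar_def)
      then show ?thesis using K phi_cosT by auto
    next
      case False
      then show ?thesis using H2 by (simp add: phi_def)
    qed
  qed
qed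

lemma main: "\<exists>!\<phi>. lie_hom_tH d c n \<phi> \<and> gens_ok \<phi>"
proof (rule ex1I[of _ phi])
  show "lie_hom_tH d c n phi \<and> gens_ok phi" using phi_hom phi_gens by blast
next
  fix \<psi> assume "lie_hom_tH d c n \<psi> \<and> gens_ok \<psi>"
  then show "\<psi> = phi" using uniq by blast
qed

end

theorem mainTheorem10:
  fixes d n :: nat and c :: "nat \<Rightarrow> nat \<Rightarrow> nat \<Rightarrow> complex"
  assumes "quadratic_lie d c"
  shows "\<exists>!\<phi>. lie_hom_tH d c n \<phi>
    \<and> (\<forall>i\<in>{1..n}. \<phi> (cosT n (fa_gen (TX i))) =
          cosH d c n (fa_sum (\<lambda>\<alpha>. fa_mul (fa_gen (Xg \<alpha>)) (fa_gen (Eg \<alpha> i))) {..<d}))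
    \<and> (\<forall>i\<in>{1..n}. \<phi> (cosT n (fa_gen (TY i))) =
          cosH d c n (fa_smult (-1) (fa_sum (\<lambda>\<alpha>. fa_mul (fa_gen (Dg \<alpha>)) (fa_gen (Eg \<alpha> i))) {..<d})))
    \<and> (\<forall>i\<in>{1..n}. \<forall>j\<in>{1..n}. i \<noteq> j \<longrightarrow> \<phi> (cosT n (fa_gen (TT i j))) =
          cosH d c n (fa_sum (\<lambda>\<alpha>. fa_mul (fa_gen (Eg \<alpha> i)) (fa_gen (Eg \<alpha> j))) {..<d}))"
proof -
  interpret A: An d n c by (rule An.intro) (rule assms)
  show ?thesis by (rule A.main)
qed


end
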